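(* Let $G\rightrightarrows X$ be a locally compact groupoid, $A\to X$ a Banach algebra $G$-bundle, $E\to X$ a Banach $A$-module bundle, $\sigma$ an $A$-valued multiplier for $G$, and $T:s^*E\to t^*E$ an $A$-linear almost $\sigma$-representation. Then $T$ is an invertible morphism of Banach bundles over $G$ (i.e. each $T(g)$ is invertible and $g\mapsto T(g)^{-1}$ defines a morphism $t^*E\to s^*E$ covering $\mathrm{id}_G$), and for all $g\in G$ $$\|T(g)^{-1}\|\le\frac{b(T,tg)}{1-r(T,tg)}.$$
   Context: A locally compact groupoid is a topological groupoid $G\rightrightarrows X$ (source $s$, target $t$, units $1x$, composable pairs $G\times_{s,t}G=\{(g,h):sg=th\}$) whose arrow space is locally compact Hausdorff, equipped with a continuous left Haar system $\{\mu^x\}_{x\in X}$: each $\mu^x$ is a Radon measure on $G$ with support $G^x=t^{-1}(x)$, $\int\varphi(gh)\,d\mu^{sg}(h)=\int\varphi(h)\,d\mu^{tg}(h)$ for $g\in G,\varphi\in C_c(G)$, and $x\mapsto\int\varphi\,d\mu^x$ is continuous. $Gx=t(s^{-1}(x))$ is the orbit of $x$. Banach bundle (Fell): Hausdorff space $E$ with continuous open surjection $p:E\to X$, continuous fiberwise vector operations over $\mathbb R$, continuous norm making fibers Banach spaces, such that nets $e_i$ with $pe_i\to x$, $|e_i|\to0$ converge to $0_x$. Morphisms: continuous fiberwise linear maps; pullbacks $s^*E,t^*E$ over $G$ have fibers $E_{sg}$, $E_{tg}$ at $g$. A Banach algebra bundle $A\to X$ is a Banach bundle with continuous fiberwise multiplications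 and a continuous unit section making fibers unital Banach algebras with $|ab|\le|a||b|$, $|1|=1$; $A^\times$ = invertible elements. A Banach $A$-module bundle is a Banach bundle $E\to X$ with a continuous fiberwise bilinear action $A\times_XE\to E$, $|ae|\le|a||e|$, $1e=e$. A Banach algebra $G$-bundle is a Banach algebra bundle with a continuous left action of $G$ by isometric algebra isomorphisms $A_{sg}\to A_{tg}$, $a\mapsto ga$. An $A$-valued multiplier is a continuous $\sigma$ on $G\times_{s,t}G$ with $\sigma(g,h)\in A^\times_{tg}$ central in $A_{tg}$, $\sigma(g,h)=1$ if $g$ or $h$ is a unit, and $\sigma(g,h)\sigma(gh,k)=g\sigma(h,k)\,\sigma(g,hk)$ for composable $g,h,k$. A pseudorepresentation is any morphism $T:s^*E\to t^*E$ covering $\mathrm{id}_G$, i.e. continuously varying bounded operators $T(g):E_{sg}\to E_{tg}$; it is $A$-linear if $T(g)(ae)=ga\cdot T(g)e$. With $\ell(\sigma,g)=\max\{1,|\sigma(g,g^{-1})^{-1}|\}$, the $\sigma$-defect and $\sigma$-bound along the orbit of $x$ are $r(T,x)=\sup_{y\in Gx}\|\mathrm{id}-T(1y)\|+\sup_{g\in t^{-1}(Gx),\,h\in G^{sg}}\ell(\sigma,g)\|\sigma(g,h)T(gh)-T(g)T(h)\|$, $b(T,x)=\sup_{g\in t^{-1}(Gx)}\ell(\sigma,g)\|T(g)\|$ (possibly infinite). $T$ is an almost $\sigma$-representation if $r(T,x)\le\min\{1/4,\,b(T,x)^{-2}/9\}$ for every $x\in X$. *)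

theory Defs
  imports "HOL-Analysis.Analysis"
begin

record ('g, 'x) groupoid =
  src  :: "'g \<Rightarrow> 'x"
  tgt  :: "'g \<Rightarrow> 'x"
  unit :: "'x \<Rightarrow> 'g"
  gmul :: "'g \<Rightarrow> 'g \<Rightarrow> 'g"
  ginv :: "'g \<Rightarrow> 'g"

definition composable :: "('g, 'x) groupoid \<Rightarrow> ('g \<times> 'g) set" where
  "composable Gr = {(g, h). src Gr g = tgt Gr h}"

definition topological_groupoid ::
  "('g::topological_space, 'x::topological_space) groupoid \<Rightarrow> bool" where
  "topological_groupoid Gr \<longleftrightarrow>
     (\<forall>x. src Gr (unit Gr x) = x \<and> tgt Gr (unit Gr x) = x) \<and>
     (\<forall>g h. src Gr g = tgt Gr h \<longrightarrow>
        src Gr (gmul Gr g h) = src Gr h \<and> tgt Gr (gmul Gr g h) = tgt Gr g) \<and>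
     (\<forall>g h k. src Gr g = tgt Gr h \<and> src Gr h = tgt Gr k \<longrightarrow>
        gmul Gr (gmul Gr g h) k = gmul Gr g (gmul Gr h k)) \<and>
     (\<forall>g. gmul Gr (unit Gr (tgt Gr g)) g = g \<and> gmul Gr g (unit Gr (src Gr g)) = g) \<and>
     (\<forall>g. src Gr (ginv Gr g) = tgt Gr g \<and> tgt Gr (ginv Gr g) = src Gr g \<and>
        gmul Gr g (ginv Gr g) = unit Gr (tgt Gr g) \<and>
        gmul Gr (ginv Gr g) g = unit Gr (src Gr g)) \<and>
     continuous_on UNIV (src Gr) \<and> continuous_on UNIV (tgt Gr) \<and>
     continuous_on UNIV (unit Gr) \<and> continuous_on UNIV (ginv Gr) \<and>
     continuous_on (composable Gr) (\<lambda>(g, h). gmul Gr g h)"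

definition radon_measure :: "'g::topological_space measure \<Rightarrow> bool" where
  "radon_measure M \<longleftrightarrow> sets M = sets borel \<and>
     (\<forall>K. compact K \<longrightarrow> emeasure M K < \<infinity>) \<and>
     (\<forall>B\<in>sets borel. emeasure M B = (INF U\<in>{U. open U \<and> B \<subseteq> U}. emeasure M U)) \<and>
     (\<forall>U. open U \<longrightarrow> emeasure M U = (SUP K\<in>{K. compact K \<and> K \<subseteq> U}. emeasure M K))"

definition msupport :: "'g::topological_space measure \<Rightarrow> 'g set" where
  "msupport M = {g. \<forall>U. open U \<and> g \<in> U \<longrightarrow> emeasure M U \<noteq> 0}"

definition Cc :: "('g::topological_space \<Rightarrow> real) set" where
  "Cc = {\<phi>. continuous_on UNIV \<phi> \<and> compact (closure {g. \<phi> g \<noteq> 0})}"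

text \<open>In the invariance integral the integrand
  \<open>h \<mapsto> \<phi>(gh)\<close> is only meaningful on \<open>G^{sg}\<close> (the support of the measure);
  outside it is set to 0.\<close>
definition haar_system ::
  "('g::topological_space, 'x::topological_space) groupoid \<Rightarrow> ('x \<Rightarrow> 'g measure) \<Rightarrow> bool" where
  "haar_system Gr \<mu> \<longleftrightarrow>
     (\<forall>x. radon_measure (\<mu> x) \<and> msupport (\<mu> x) = {g. tgt Gr g = x}) \<and>
     (\<forall>\<phi>\<in>Cc.
        (\<forall>g. (\<integral>h. (if tgt Gr h = src Gr g then \<phi> (gmul Gr g h) else 0) \<partial>\<mu> (src Gr g))
             = (\<integral>h. \<phi> h \<partial>\<mu> (tgt Gr g))) \<and>
        continuous_on UNIV (\<lambda>x. \<integral>h. \<phi> h \<partial>\<mu> x))"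

definition locally_compact_groupoid ::
  "('g::t2_space, 'x::topological_space) groupoid \<Rightarrow> ('x \<Rightarrow> 'g measure) \<Rightarrow> bool" where
  "locally_compact_groupoid Gr \<mu> \<longleftrightarrow>
     topological_groupoid Gr \<and> locally_compact_space (euclidean :: 'g topology) \<and>
     haar_system Gr \<mu>"

definition orbit :: "('g, 'x) groupoid \<Rightarrow> 'x \<Rightarrow> 'x set" where
  "orbit Gr x = tgt Gr ` {g. src Gr g = x}"

record ('x, 'e) bbundle =
  bproj  :: "'e \<Rightarrow> 'x"
  badd   :: "'e \<Rightarrow> 'e \<Rightarrow> 'e"
  bscale :: "real \<Rightarrow> 'e \<Rightarrow> 'e"
  bzero  :: "'x \<Rightarrow> 'e"
  bnorm  :: "'e \<Rightarrow> real"

definition fib :: "('x, 'e, 'z) bbundle_scheme \<Rightarrow> 'x \<Rightarrow> 'e set" where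
  "fib E x = {e. bproj E e = x}"

definition bsub :: "('x, 'e, 'z) bbundle_scheme \<Rightarrow> 'e \<Rightarrow> 'e \<Rightarrow> 'e" where
  "bsub E a b = badd E a (bscale E (-1) b)"

definition banach_fiber :: "('x, 'e, 'z) bbundle_scheme \<Rightarrow> 'x \<Rightarrow> bool" where
  "banach_fiber E x \<longleftrightarrow>
     bzero E x \<in> fib E x \<and>
     (\<forall>a\<in>fib E x. \<forall>b\<in>fib E x. badd E a b \<in> fib E x) \<and>
     (\<forall>c. \<forall>a\<in>fib E x. bscale E c a \<in> fib E x) \<and>
     (\<forall>a\<in>fib E x. \<forall>b\<in>fib E x. \<forall>c\<in>fib E x. badd E (badd E a b) c = badd E a (badd E b c)) \<and>
     (\<forall>a\<in>fib E x. \<forall>b\<in>fib E x. badd E a b = badd E b a) \<and>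
     (\<forall>a\<in>fib E x. badd E a (bzero E x) = a) \<and>
     (\<forall>a\<in>fib E x. badd E a (bscale E (-1) a) = bzero E x) \<and>
     (\<forall>a\<in>fib E x. bscale E 1 a = a) \<and>
     (\<forall>c d. \<forall>a\<in>fib E x. bscale E c (bscale E d a) = bscale E (c * d) a) \<and>
     (\<forall>c d. \<forall>a\<in>fib E x. bscale E (c + d) a = badd E (bscale E c a) (bscale E d a)) \<and>
     (\<forall>c. \<forall>a\<in>fib E x. \<forall>b\<in>fib E x. bscale E c (badd E a b) = badd E (bscale E c a) (bscale E c b)) \<and>
     (\<forall>a\<in>fib E x. 0 \<le> bnorm E a \<and> (bnorm E a = 0 \<longleftrightarrow> a = bzero E x)) \<and>
     (\<forall>c. \<forall>a\<in>fib E x. bnorm E (bscale E c a) = \<bar>c\<bar> * bnorm E a) \<and>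
     (\<forall>a\<in>fib E x. \<forall>b\<in>fib E x. bnorm E (badd E a b) \<le> bnorm E a + bnorm E b) \<and>
     (\<forall>f::nat \<Rightarrow> 'e. (\<forall>n. f n \<in> fib E x) \<and>
        (\<forall>\<epsilon>>0. \<exists>N. \<forall>m\<ge>N. \<forall>n\<ge>N. bnorm E (bsub E (f m) (f n)) < \<epsilon>) \<longrightarrow>
        (\<exists>l\<in>fib E x. (\<lambda>n. bnorm E (bsub E (f n) l)) \<longlonglongrightarrow> 0))"

text \<open>Fell's Banach bundle; the net condition is stated with filters
  (every net gives a filter and conversely).  Hausdorffness of \<open>E\<close> is
  imposed by the type class \<open>t2_space\<close> in the statement.\<close>
definition banach_bundle ::
  "('x::topological_space, 'e::topological_space, 'z) bbundle_scheme \<Rightarrow> bool" where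
  "banach_bundle E \<longleftrightarrow>
     continuous_on UNIV (bproj E) \<and> (\<forall>U. open U \<longrightarrow> open (bproj E ` U)) \<and>
     surj (bproj E) \<and> (\<forall>x. banach_fiber E x) \<and>
     continuous_on {(a, b). bproj E a = bproj E b} (\<lambda>(a, b). badd E a b) \<and>
     continuous_on UNIV (\<lambda>(c, a). bscale E c a) \<and>
     continuous_on UNIV (bnorm E) \<and>
     (\<forall>x (F :: 'e filter). filterlim (bproj E) (nhds x) F \<and> ((bnorm E) \<longlongrightarrow> 0) F
        \<longrightarrow> ((\<lambda>e. e) \<longlongrightarrow> bzero E x) F)"

definition fib_bounded_linear ::
  "('x, 'e, 'z) bbundle_scheme \<Rightarrow> ('x, 'f, 'w) bbundle_scheme \<Rightarrow> 'x \<Rightarrow> 'x \<Rightarrow> ('e \<Rightarrow> 'f) \<Rightarrow> bool" where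
  "fib_bounded_linear E F x y f \<longleftrightarrow>
     (\<forall>a\<in>fib E x. f a \<in> fib F y) \<and>
     (\<forall>a\<in>fib E x. \<forall>b\<in>fib E x. f (badd E a b) = badd F (f a) (f b)) \<and>
     (\<forall>c. \<forall>a\<in>fib E x. f (bscale E c a) = bscale F c (f a)) \<and>
     (\<exists>K. \<forall>a\<in>fib E x. bnorm F (f a) \<le> K * bnorm E a)"

definition opnorm ::
  "('x, 'e, 'z) bbundle_scheme \<Rightarrow> ('x, 'f, 'w) bbundle_scheme \<Rightarrow> 'x \<Rightarrow> ('e \<Rightarrow> 'f) \<Rightarrow> ereal" where
  "opnorm E F x f = (SUP a\<in>{a\<in>fib E x. bnorm E a \<le> 1}. ereal (bnorm F (f a)))"

definition pullback_morphism ::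
  "('x::topological_space, 'e::topological_space, 'z) bbundle_scheme \<Rightarrow>
   ('x, 'f::topological_space, 'w) bbundle_scheme \<Rightarrow>
   ('g::topological_space \<Rightarrow> 'x) \<Rightarrow> ('g \<Rightarrow> 'x) \<Rightarrow> ('g \<Rightarrow> 'e \<Rightarrow> 'f) \<Rightarrow> bool" where
  "pullback_morphism E F \<alpha> \<beta> T \<longleftrightarrow>
     (\<forall>g. fib_bounded_linear E F (\<alpha> g) (\<beta> g) (T g)) \<and>
     continuous_on {(g, e). bproj E e = \<alpha> g} (\<lambda>(g, e). (g, T g e))"

record ('x, 'a) babundle = "('x, 'a) bbundle" +
  amul :: "'a \<Rightarrow> 'a \<Rightarrow> 'a"
  aone :: "'x \<Rightarrow> 'a"

definition banach_algebra_bundle ::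
  "('x::topological_space, 'a::topological_space) babundle \<Rightarrow> bool" where
  "banach_algebra_bundle A \<longleftrightarrow> banach_bundle A \<and>
     continuous_on {(a, b). bproj A a = bproj A b} (\<lambda>(a, b). amul A a b) \<and>
     continuous_on UNIV (aone A) \<and>
     (\<forall>x. aone A x \<in> fib A x \<and> bnorm A (aone A x) = 1 \<and>
       (\<forall>a\<in>fib A x. \<forall>b\<in>fib A x. amul A a b \<in> fib A x \<and>
          bnorm A (amul A a b) \<le> bnorm A a * bnorm A b) \<and>
       (\<forall>a\<in>fib A x. \<forall>b\<in>fib A x. \<forall>c\<in>fib A x.
          amul A (amul A a b) c = amul A a (amul A b c) \<and>
          amul A (badd A a b) c = badd A (amul A a c) (amul A b c) \<and>
          amul A a (badd A b c) = badd A (amul A a b) (amul A a c)) \<and>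
       (\<forall>r. \<forall>a\<in>fib A x. \<forall>b\<in>fib A x.
          amul A (bscale A r a) b = bscale A r (amul A a b) \<and>
          amul A a (bscale A r b) = bscale A r (amul A a b)) \<and>
       (\<forall>a\<in>fib A x. amul A (aone A x) a = a \<and> amul A a (aone A x) = a))"

definition a_invertible :: "('x, 'a) babundle \<Rightarrow> 'a \<Rightarrow> bool" where
  "a_invertible A a \<longleftrightarrow> (\<exists>b\<in>fib A (bproj A a).
     amul A a b = aone A (bproj A a) \<and> amul A b a = aone A (bproj A a))"

definition ainv :: "('x, 'a) babundle \<Rightarrow> 'a \<Rightarrow> 'a" where
  "ainv A a = (THE b. b \<in> fib A (bproj A a) \<and>
     amul A a b = aone A (bproj A a) \<and> amul A b a = aone A (bproj A a))"

definition algebra_G_bundle ::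
  "('g::topological_space, 'x::topological_space) groupoid \<Rightarrow>
   ('x, 'a::topological_space) babundle \<Rightarrow> ('g \<Rightarrow> 'a \<Rightarrow> 'a) \<Rightarrow> bool" where
  "algebra_G_bundle Gr A act \<longleftrightarrow> banach_algebra_bundle A \<and>
     continuous_on {(g, a). bproj A a = src Gr g} (\<lambda>(g, a). act g a) \<and>
     (\<forall>g. bij_betw (act g) (fib A (src Gr g)) (fib A (tgt Gr g)) \<and>
        act g (aone A (src Gr g)) = aone A (tgt Gr g) \<and>
        (\<forall>a\<in>fib A (src Gr g). bnorm A (act g a) = bnorm A a) \<and>
        (\<forall>r. \<forall>a\<in>fib A (src Gr g). act g (bscale A r a) = bscale A r (act g a)) \<and>
        (\<forall>a\<in>fib A (src Gr g). \<forall>b\<in>fib A (src Gr g).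
           act g (badd A a b) = badd A (act g a) (act g b) \<and>
           act g (amul A a b) = amul A (act g a) (act g b))) \<and>
     (\<forall>a. act (unit Gr (bproj A a)) a = a) \<and>
     (\<forall>g h a. src Gr g = tgt Gr h \<and> bproj A a = src Gr h \<longrightarrow>
        act (gmul Gr g h) a = act g (act h a))"

definition module_bundle ::
  "('x::topological_space, 'a::topological_space) babundle \<Rightarrow>
   ('x, 'e::topological_space) bbundle \<Rightarrow> ('a \<Rightarrow> 'e \<Rightarrow> 'e) \<Rightarrow> bool" where
  "module_bundle A E m \<longleftrightarrow> banach_bundle E \<and>
     continuous_on {(a, e). bproj A a = bproj E e} (\<lambda>(a, e). m a e) \<and>
     (\<forall>x. \<forall>a\<in>fib A x. \<forall>e\<in>fib E x.
        m a e \<in> fib E x \<and> bnorm E (m a e) \<le> bnorm A a * bnorm E e \<and>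
        (\<forall>b\<in>fib A x. m (badd A a b) e = badd E (m a e) (m b e) \<and>
                      m (amul A a b) e = m a (m b e)) \<and>
        (\<forall>e'\<in>fib E x. m a (badd E e e') = badd E (m a e) (m a e')) \<and>
        (\<forall>r. m (bscale A r a) e = bscale E r (m a e) \<and>
             m a (bscale E r e) = bscale E r (m a e))) \<and>
     (\<forall>x. \<forall>e\<in>fib E x. m (aone A x) e = e)"

definition multiplier ::
  "('g::topological_space, 'x::topological_space) groupoid \<Rightarrow>
   ('x, 'a::topological_space) babundle \<Rightarrow> ('g \<Rightarrow> 'a \<Rightarrow> 'a) \<Rightarrow> ('g \<Rightarrow> 'g \<Rightarrow> 'a) \<Rightarrow> bool" where
  "multiplier Gr A act \<sigma> \<longleftrightarrow>
     continuous_on (composable Gr) (\<lambda>(g, h). \<sigma> g h) \<and>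
     (\<forall>g h. src Gr g = tgt Gr h \<longrightarrow>
        \<sigma> g h \<in> fib A (tgt Gr g) \<and> a_invertible A (\<sigma> g h) \<and>
        (\<forall>a\<in>fib A (tgt Gr g). amul A (\<sigma> g h) a = amul A a (\<sigma> g h)) \<and>
        (g \<in> range (unit Gr) \<or> h \<in> range (unit Gr) \<longrightarrow> \<sigma> g h = aone A (tgt Gr g))) \<and>
     (\<forall>g h k. src Gr g = tgt Gr h \<and> src Gr h = tgt Gr k \<longrightarrow>
        amul A (\<sigma> g h) (\<sigma> (gmul Gr g h) k) = amul A (act g (\<sigma> h k)) (\<sigma> g (gmul Gr h k)))"

definition ell :: "('g, 'x) groupoid \<Rightarrow> ('x, 'a) babundle \<Rightarrow> ('g \<Rightarrow> 'g \<Rightarrow> 'a) \<Rightarrow> 'g \<Rightarrow> real" where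
  "ell Gr A \<sigma> g = max 1 (bnorm A (ainv A (\<sigma> g (ginv Gr g))))"

definition defect ::
  "('g, 'x) groupoid \<Rightarrow> ('x, 'a) babundle \<Rightarrow> ('x, 'e) bbundle \<Rightarrow> ('a \<Rightarrow> 'e \<Rightarrow> 'e) \<Rightarrow>
   ('g \<Rightarrow> 'g \<Rightarrow> 'a) \<Rightarrow> ('g \<Rightarrow> 'e \<Rightarrow> 'e) \<Rightarrow> 'x \<Rightarrow> ereal" where
  "defect Gr A E m \<sigma> T x =
     (SUP y\<in>orbit Gr x. opnorm E E y (\<lambda>e. bsub E e (T (unit Gr y) e))) +
     (SUP gh\<in>{(g, h). tgt Gr g \<in> orbit Gr x \<and> tgt Gr h = src Gr g}.
        ereal (ell Gr A \<sigma> (fst gh)) *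
        opnorm E E (src Gr (snd gh))
          (\<lambda>e. bsub E (m (\<sigma> (fst gh) (snd gh)) (T (gmul Gr (fst gh) (snd gh)) e))
                       (T (fst gh) (T (snd gh) e))))"

definition bound ::
  "('g, 'x) groupoid \<Rightarrow> ('x, 'a) babundle \<Rightarrow> ('x, 'e) bbundle \<Rightarrow>
   ('g \<Rightarrow> 'g \<Rightarrow> 'a) \<Rightarrow> ('g \<Rightarrow> 'e \<Rightarrow> 'e) \<Rightarrow> 'x \<Rightarrow> ereal" where
  "bound Gr A E \<sigma> T x =
     (SUP g\<in>{g. tgt Gr g \<in> orbit Gr x}. ereal (ell Gr A \<sigma> g) * opnorm E E (src Gr g) (T g))"

definition A_linear ::
  "('g, 'x) groupoid \<Rightarrow> ('x, 'a) babundle \<Rightarrow> ('x, 'e) bbundle \<Rightarrow> ('g \<Rightarrow> 'a \<Rightarrow> 'a) \<Rightarrow>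
   ('a \<Rightarrow> 'e \<Rightarrow> 'e) \<Rightarrow> ('g \<Rightarrow> 'e \<Rightarrow> 'e) \<Rightarrow> bool" where
  "A_linear Gr A E act m T \<longleftrightarrow>
     (\<forall>g. \<forall>a\<in>fib A (src Gr g). \<forall>e\<in>fib E (src Gr g). T g (m a e) = m (act g a) (T g e))"

definition almost_representation ::
  "('g::topological_space, 'x::topological_space) groupoid \<Rightarrow> ('x, 'a) babundle \<Rightarrow>
   ('x, 'e::topological_space) bbundle \<Rightarrow> ('a \<Rightarrow> 'e \<Rightarrow> 'e) \<Rightarrow>
   ('g \<Rightarrow> 'g \<Rightarrow> 'a) \<Rightarrow> ('g \<Rightarrow> 'e \<Rightarrow> 'e) \<Rightarrow> bool" where
  "almost_representation Gr A E m \<sigma> T \<longleftrightarrow>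
     pullback_morphism E E (src Gr) (tgt Gr) T \<and>
     (\<forall>x. defect Gr A E m \<sigma> T x \<le> 1 / 4 \<and>
          defect Gr A E m \<sigma> T x \<le> inverse ((bound Gr A E \<sigma> T x)\<^sup>2) / 9)"

end

theory Submission
  imports Defs
begin


locale bfib =
  fixes E :: "('x, 'e, 'z) bbundle_scheme" and z :: 'x
  assumes bf: "banach_fiber E z"
begin

abbreviation V where "V \<equiv> fib E z"
abbreviation add (infixl "\<oplus>" 65) where "a \<oplus> b \<equiv> badd E a b"
abbreviation neg where "neg a \<equiv> bscale E (-1) a"
abbreviation sub (infixl "\<ominus>" 65) where "a \<ominus> b \<equiv> bsub E a b"
abbreviation zr where "zr \<equiv> bzero E z"
abbreviation nrm where "nrm a \<equiv> bnorm E a"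

lemmas bfD = bf[unfolded banach_fiber_def]

lemma zm[simp]: "zr \<in> V" using bfD[THEN conjunct1] by blast
lemma addm[simp]: "a \<in> V \<Longrightarrow> b \<in> V \<Longrightarrow> a \<oplus> b \<in> V" using bfD[THEN conjunct2, THEN conjunct1] by blast
lemma scm[simp]: "a \<in> V \<Longrightarrow> bscale E c a \<in> V" using bfD[THEN conjunct2, THEN conjunct2, THEN conjunct1] by blast
lemma subm[simp]: "a \<in> V \<Longrightarrow> b \<in> V \<Longrightarrow> a \<ominus> b \<in> V" unfolding bsub_def by simp
lemma assoc: "a \<in> V \<Longrightarrow> b \<in> V \<Longrightarrow> c \<in> V \<Longrightarrow> (a \<oplus> b) \<oplus> c = a \<oplus> (b \<oplus> c)"
  using bfD[THEN conjunct2, THEN conjunct2, THEN conjunct2, THEN conjunct1] by blast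
lemma comm: "a \<in> V \<Longrightarrow> b \<in> V \<Longrightarrow> a \<oplus> b = b \<oplus> a"
  using bfD[THEN conjunct2, THEN conjunct2, THEN conjunct2, THEN conjunct2, THEN conjunct1] by blast
lemma lcomm: "a \<in> V \<Longrightarrow> b \<in> V \<Longrightarrow> c \<in> V \<Longrightarrow> a \<oplus> (b \<oplus> c) = b \<oplus> (a \<oplus> c)"
  by (metis assoc comm)
lemma zr_r[simp]: "a \<in> V \<Longrightarrow> a \<oplus> zr = a"
  using bfD[THEN conjunct2, THEN conjunct2, THEN conjunct2, THEN conjunct2, THEN conjunct2, THEN conjunct1] by blast
lemma zr_l[simp]: "a \<in> V \<Longrightarrow> zr \<oplus> a = a"
  using comm zr_r zm by metis
lemma negr[simp]: "a \<in> V \<Longrightarrow> a \<oplus> neg a = zr"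
  using bfD[THEN conjunct2, THEN conjunct2, THEN conjunct2, THEN conjunct2, THEN conjunct2, THEN conjunct2, THEN conjunct1] by blast
lemma negl[simp]: "a \<in> V \<Longrightarrow> neg a \<oplus> a = zr"
  using comm negr scm by metis
lemma sc1[simp]: "a \<in> V \<Longrightarrow> bscale E 1 a = a"
  using bfD[THEN conjunct2, THEN conjunct2, THEN conjunct2, THEN conjunct2, THEN conjunct2, THEN conjunct2, THEN conjunct2, THEN conjunct1] by blast
lemma scsc[simp]: "a \<in> V \<Longrightarrow> bscale E c (bscale E d a) = bscale E (c * d) a"
  using bfD[THEN conjunct2, THEN conjunct2, THEN conjunct2, THEN conjunct2, THEN conjunct2, THEN conjunct2, THEN conjunct2, THEN conjunct2, THEN conjunct1] by blast
lemma scadd: "a \<in> V \<Longrightarrow> bscale E (c + d) a = bscale E c a \<oplus> bscale E d a"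
  using bfD[THEN conjunct2, THEN conjunct2, THEN conjunct2, THEN conjunct2, THEN conjunct2, THEN conjunct2, THEN conjunct2, THEN conjunct2, THEN conjunct2, THEN conjunct1] by blast
lemma scdist: "a \<in> V \<Longrightarrow> b \<in> V \<Longrightarrow> bscale E c (a \<oplus> b) = bscale E c a \<oplus> bscale E c b"
  using bfD[THEN conjunct2, THEN conjunct2, THEN conjunct2, THEN conjunct2, THEN conjunct2, THEN conjunct2, THEN conjunct2, THEN conjunct2, THEN conjunct2, THEN conjunct2, THEN conjunct1] by blast
lemma nrm_nonneg[simp]: "a \<in> V \<Longrightarrow> 0 \<le> nrm a"
  using bfD[THEN conjunct2, THEN conjunct2, THEN conjunct2, THEN conjunct2, THEN conjunct2, THEN conjunct2, THEN conjunct2, THEN conjunct2, THEN conjunct2, THEN conjunct2, THEN conjunct2, THEN conjunct1] by blast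
lemma nrm_zero_iff: "a \<in> V \<Longrightarrow> nrm a = 0 \<longleftrightarrow> a = zr"
  using bfD[THEN conjunct2, THEN conjunct2, THEN conjunct2, THEN conjunct2, THEN conjunct2, THEN conjunct2, THEN conjunct2, THEN conjunct2, THEN conjunct2, THEN conjunct2, THEN conjunct2, THEN conjunct1] by blast
lemma nrm_zr[simp]: "nrm zr = 0" using nrm_zero_iff zm by blast
lemma nrm_sc[simp]: "a \<in> V \<Longrightarrow> nrm (bscale E c a) = \<bar>c\<bar> * nrm a"
  using bfD[THEN conjunct2, THEN conjunct2, THEN conjunct2, THEN conjunct2, THEN conjunct2, THEN conjunct2, THEN conjunct2, THEN conjunct2, THEN conjunct2, THEN conjunct2, THEN conjunct2, THEN conjunct2, THEN conjunct1] by blast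
lemma nrm_tri: "a \<in> V \<Longrightarrow> b \<in> V \<Longrightarrow> nrm (a \<oplus> b) \<le> nrm a + nrm b"
  using bfD[THEN conjunct2, THEN conjunct2, THEN conjunct2, THEN conjunct2, THEN conjunct2, THEN conjunct2, THEN conjunct2, THEN conjunct2, THEN conjunct2, THEN conjunct2, THEN conjunct2, THEN conjunct2, THEN conjunct2, THEN conjunct1] by blast
lemma complete:
  assumes "\<And>n. f n \<in> V" "\<And>\<epsilon>. \<epsilon> > 0 \<Longrightarrow> \<exists>N. \<forall>m\<ge>N. \<forall>n\<ge>N. nrm (f m \<ominus> f n) < \<epsilon>"
  shows "\<exists>l\<in>V. (\<lambda>n. nrm (f n \<ominus> l)) \<longlonglongrightarrow> 0"
  using bfD[THEN conjunct2, THEN conjunct2, THEN conjunct2, THEN conjunct2, THEN conjunct2, THEN conjunct2, THEN conjunct2, THEN conjunct2, THEN conjunct2, THEN conjunct2, THEN conjunct2, THEN conjunct2, THEN conjunct2, THEN conjunct2] assms by blast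

lemma cancel_l: assumes "a \<in> V" "b \<in> V" "c \<in> V" "a \<oplus> b = a \<oplus> c" shows "b = c"
proof -
  have "b = neg a \<oplus> (a \<oplus> b)" using assms by (metis assoc negl scm zr_l)
  also have "\<dots> = neg a \<oplus> (a \<oplus> c)" using assms by simp
  also have "\<dots> = c" using assms by (metis assoc negl scm zr_l)
  finally show ?thesis .
qed

lemma sc0[simp]: assumes "a \<in> V" shows "bscale E 0 a = zr"
proof -
  have "bscale E 0 a \<oplus> bscale E 0 a = bscale E 0 a \<oplus> zr"
    using scadd[OF assms, of 0 0] assms by simp
  thus ?thesis using cancel_l assms by (metis scm zm)
qed

lemma sc_zr[simp]: "bscale E c zr = zr"
proof -
  have "bscale E c zr \<oplus> bscale E c zr = bscale E c zr \<oplus> zr"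
    using scdist[of zr zr c] by simp
  thus ?thesis using cancel_l by (metis scm zm)
qed

lemma negl2[simp]: "a \<in> V \<Longrightarrow> b \<in> V \<Longrightarrow> neg a \<oplus> (a \<oplus> b) = b"
  by (metis assoc negl scm zr_l)
lemma negr2[simp]: "a \<in> V \<Longrightarrow> b \<in> V \<Longrightarrow> a \<oplus> (neg a \<oplus> b) = b"
  by (metis assoc negr scm zr_l)

lemma neg_neg[simp]: "a \<in> V \<Longrightarrow> neg (neg a) = a" by simp

lemma sub_def': "a \<ominus> b = a \<oplus> neg b" by (simp add: bsub_def)

lemma add_sub[simp]: "a \<in> V \<Longrightarrow> b \<in> V \<Longrightarrow> b \<oplus> (a \<ominus> b) = a"
  unfolding bsub_def by (simp add: lcomm[of b a])

lemma sub_self[simp]: "a \<in> V \<Longrightarrow> a \<ominus> a = zr" unfolding bsub_def by simp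
lemma sub_zr[simp]: "a \<in> V \<Longrightarrow> a \<ominus> zr = a" unfolding bsub_def by simp

lemma sub_add_sub: assumes "a \<in> V" "b \<in> V" "c \<in> V"
  shows "(a \<ominus> b) \<oplus> (b \<ominus> c) = a \<ominus> c"
proof -
  have "(a \<oplus> neg b) \<oplus> (b \<oplus> neg c) = a \<oplus> ((neg b \<oplus> b) \<oplus> neg c)"
    using assms by (simp add: assoc)
  thus ?thesis using assms unfolding bsub_def by simp
qed

lemma neg_sub: "a \<in> V \<Longrightarrow> b \<in> V \<Longrightarrow> neg (a \<ominus> b) = b \<ominus> a"
  unfolding bsub_def by (simp add: scdist comm)

lemma sc_sub: "a \<in> V \<Longrightarrow> b \<in> V \<Longrightarrow> bscale E c (a \<ominus> b) = bscale E c a \<ominus> bscale E c b"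
  unfolding bsub_def by (simp add: scdist mult.commute)

lemma neg_add: "a \<in> V \<Longrightarrow> b \<in> V \<Longrightarrow> neg (a \<oplus> b) = neg a \<oplus> neg b"
  by (simp add: scdist)

lemma sub_sub_sub: assumes "a \<in> V" "b \<in> V" "c \<in> V" "d \<in> V"
  shows "(a \<ominus> b) \<ominus> (c \<ominus> d) = (a \<ominus> c) \<ominus> (b \<ominus> d)"
  using assms unfolding bsub_def by (simp add: neg_add assoc comm lcomm)

lemma add_sub_add: assumes "a \<in> V" "b \<in> V" "c \<in> V"
  shows "(a \<oplus> b) \<ominus> (a \<oplus> c) = b \<ominus> c"
proof -
  have "(a \<oplus> b) \<ominus> (a \<oplus> c) = a \<oplus> (b \<oplus> (neg a \<oplus> neg c))"
    using assms unfolding bsub_def by (simp add: neg_add assoc)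
  also have "\<dots> = a \<oplus> (neg a \<oplus> (b \<oplus> neg c))" using assms lcomm[of b "neg a" "neg c"] by simp
  also have "\<dots> = b \<ominus> c" using assms unfolding bsub_def by simp
  finally show ?thesis .
qed

lemma nrm_sub_comm: "a \<in> V \<Longrightarrow> b \<in> V \<Longrightarrow> nrm (a \<ominus> b) = nrm (b \<ominus> a)"
  by (metis neg_sub nrm_sc subm abs_neg_one mult_1)

lemma nrm_sub_tri: "a \<in> V \<Longrightarrow> b \<in> V \<Longrightarrow> c \<in> V \<Longrightarrow> nrm (a \<ominus> c) \<le> nrm (a \<ominus> b) + nrm (b \<ominus> c)"
  by (metis sub_add_sub nrm_tri subm)

lemma nrm_sub_le: "a \<in> V \<Longrightarrow> b \<in> V \<Longrightarrow> nrm (a \<ominus> b) \<le> nrm a + nrm b"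
  by (metis sub_def' nrm_tri scm nrm_sc abs_neg_one mult_1)

lemma nrm_le_sub: "a \<in> V \<Longrightarrow> b \<in> V \<Longrightarrow> nrm a \<le> nrm (a \<ominus> b) + nrm b"
  by (metis add_sub nrm_tri subm comm)

lemma sub_eq_zr: "a \<in> V \<Longrightarrow> b \<in> V \<Longrightarrow> a \<ominus> b = zr \<Longrightarrow> a = b"
  by (metis add_sub zr_r)

definition dd where "dd a b = (if a \<in> V \<and> b \<in> V then nrm (a \<ominus> b) else 0)"

lemma msp: "Metric_space V dd"
proof
  show "0 \<le> dd x y" for x y unfolding dd_def by simp
  show "dd x y = dd y x" for x y unfolding dd_def using nrm_sub_comm by auto
  show "x \<in> V \<Longrightarrow> y \<in> V \<Longrightarrow> dd x y = 0 \<longleftrightarrow> x = y" for x y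
  proof -
    assume xy: "x \<in> V" "y \<in> V"
    have "nrm (x \<ominus> y) = 0 \<longleftrightarrow> x = y"
    proof
      assume "nrm (x \<ominus> y) = 0"
      then have "x \<ominus> y = zr" using nrm_zero_iff[of "x \<ominus> y"] xy subm by blast
      then show "x = y" using sub_eq_zr xy by blast
    next
      assume "x = y" then show "nrm (x \<ominus> y) = 0" using xy by simp
    qed
    then show ?thesis unfolding dd_def using xy by simp
  qed
  show "x \<in> V \<Longrightarrow> y \<in> V \<Longrightarrow> z \<in> V \<Longrightarrow> dd x z \<le> dd x y + dd y z" for x y z
    unfolding dd_def using nrm_sub_tri by auto
qed

lemma mcompl: "Metric_space.mcomplete V dd"
  unfolding Metric_space.mcomplete_def[OF msp] Metric_space.MCauchy_def[OF msp]
proof (intro allI impI)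
  fix f :: "nat \<Rightarrow> 'e" assume a: "range f \<subseteq> V \<and> (\<forall>\<epsilon>>0. \<exists>N. \<forall>n n'. N \<le> n \<longrightarrow> N \<le> n' \<longrightarrow> dd (f n) (f n') < \<epsilon>)"
  then have fV: "\<And>n. f n \<in> V" by auto
  have "\<exists>N. \<forall>m\<ge>N. \<forall>n\<ge>N. nrm (f m \<ominus> f n) < \<epsilon>" if "\<epsilon> > 0" for \<epsilon>
  proof -
    from a that obtain N where N: "\<forall>n n'. N \<le> n \<longrightarrow> N \<le> n' \<longrightarrow> dd (f n) (f n') < \<epsilon>" by blast
    show ?thesis apply (intro exI[of _ N]) using N fV by (simp add: dd_def)
  qed
  from complete[OF fV this] obtain l where l: "l \<in> V" "(\<lambda>n. nrm (f n \<ominus> l)) \<longlonglongrightarrow> 0"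
    by blast
  have "(\<lambda>n. dd (f n) l) = (\<lambda>n. nrm (f n \<ominus> l))" unfolding dd_def using fV l by auto
  then show "\<exists>x. limitin (Metric_space.mtopology V dd) f x sequentially"
    using l fV by (auto simp: Metric_space.limitin_metric_dist_null[OF msp])
qed

lemma solve:
  assumes PV: "\<And>u. u \<in> V \<Longrightarrow> P u \<in> V"
    and Padd: "\<And>u v. u \<in> V \<Longrightarrow> v \<in> V \<Longrightarrow> P (u \<ominus> v) = P u \<ominus> P v"
    and Pn: "\<And>u. u \<in> V \<Longrightarrow> nrm (u \<ominus> P u) \<le> q * nrm u"
    and q: "q < 1" and e: "e \<in> V"
  shows "\<exists>u\<in>V. P u = e"
proof -
  interpret M: Metric_space V dd by (rule msp)
  define f where "f u = e \<oplus> (u \<ominus> P u)" for u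
  have fV: "f \<in> V \<rightarrow> V" unfolding f_def using PV e by auto
  have con: "dd (f u) (f v) \<le> q * dd u v" if "u \<in> V" "v \<in> V" for u v
  proof -
    have "f u \<ominus> f v = (u \<ominus> P u) \<ominus> (v \<ominus> P v)" unfolding f_def
      using add_sub_add that PV e by auto
    also have "\<dots> = (u \<ominus> v) \<ominus> (P u \<ominus> P v)" using sub_sub_sub that PV by auto
    also have "\<dots> = (u \<ominus> v) \<ominus> P (u \<ominus> v)" using Padd that by simp
    finally have "nrm (f u \<ominus> f v) \<le> q * nrm (u \<ominus> v)" using Pn that by simp
    thus ?thesis unfolding dd_def using that fV by auto
  qed
  obtain u where u: "u \<in> V" "f u = u"
    using M.Banach_fixedpoint_thm[OF mcompl _ fV q con] e by blast
  have "e \<oplus> (u \<ominus> P u) = P u \<oplus> (u \<ominus> P u)" using u PV unfolding f_def by simp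
  then have wq: "(u \<ominus> P u) \<oplus> e = (u \<ominus> P u) \<oplus> P u" using comm u PV e subm by metis
  have "e = P u" by (rule cancel_l[OF _ _ _ wq]) (use u PV e in auto)
  thus ?thesis using u by auto
qed

end



lemma bb_fiber: "banach_bundle E \<Longrightarrow> bfib E x"
  unfolding banach_bundle_def bfib_def by blast

lemma fib_self[simp]: "e \<in> fib E (bproj E e)" by (simp add: fib_def)
lemma in_fib: "e \<in> fib E x \<longleftrightarrow> bproj E e = x" by (simp add: fib_def)

lemma bb_parts:
  fixes E :: "('x::topological_space, 'e::topological_space, 'z) bbundle_scheme"
  assumes "banach_bundle E"
  shows "continuous_on UNIV (bproj E)" "\<And>U. open U \<Longrightarrow> open (bproj E ` U)"
    "continuous_on {(a, b). bproj E a = bproj E b} (\<lambda>(a, b). badd E a b)"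
    "continuous_on UNIV (\<lambda>(c, a). bscale E c a)"
    "continuous_on UNIV (bnorm E)"
    "\<And>x (F :: 'e filter). filterlim (bproj E) (nhds x) F \<Longrightarrow> ((bnorm E) \<longlongrightarrow> 0) F
        \<Longrightarrow> ((\<lambda>e. e) \<longlongrightarrow> bzero E x) F"
  using assms unfolding banach_bundle_def by blast+

lemma p_badd: assumes bb: "banach_bundle E" and "bproj E a = bproj E b"
  shows "bproj E (badd E a b) = bproj E a"
proof -
  interpret bfib E "bproj E a" by (rule bb_fiber[OF bb])
  show ?thesis using assms(2) addm[of a b] by (simp add: in_fib)
qed
lemma p_bscale: assumes bb: "banach_bundle E" shows "bproj E (bscale E c a) = bproj E a"
proof -
  interpret bfib E "bproj E a" by (rule bb_fiber[OF bb])
  show ?thesis using scm[of a c] by (simp add: in_fib)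
qed
lemma p_bsub: "banach_bundle E \<Longrightarrow> bproj E a = bproj E b \<Longrightarrow> bproj E (bsub E a b) = bproj E a"
  unfolding bsub_def by (simp add: p_badd p_bscale)
lemma p_bzero: assumes bb: "banach_bundle E" shows "bproj E (bzero E x) = x"
proof -
  interpret bfib E x by (rule bb_fiber[OF bb])
  show ?thesis using zm by (simp add: in_fib)
qed

lemma bb_add_sub: assumes bb: "banach_bundle E" and "bproj E a = bproj E b"
  shows "badd E b (bsub E a b) = a"
proof -
  interpret bfib E "bproj E a" by (rule bb_fiber[OF bb])
  show ?thesis using assms(2) add_sub[of a b] by (simp add: in_fib)
qed
lemma bb_zr_r: assumes bb: "banach_bundle E" shows "badd E a (bzero E (bproj E a)) = a"
proof -
  interpret bfib E "bproj E a" by (rule bb_fiber[OF bb])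
  show ?thesis by simp
qed
lemma bb_sub_self: assumes bb: "banach_bundle E" shows "bnorm E (bsub E w w) = 0"
proof -
  interpret bfib E "bproj E w" by (rule bb_fiber[OF bb])
  show ?thesis by simp
qed

context
  fixes E :: "('x::topological_space, 'e::topological_space, 'z) bbundle_scheme"
  assumes bb: "banach_bundle E"
begin

lemma p_tendsto: "(f \<longlongrightarrow> f0) F \<Longrightarrow> ((\<lambda>i. bproj E (f i)) \<longlongrightarrow> bproj E f0) F"
  using bb_parts(1)[OF bb] continuous_on_tendsto_compose[of UNIV "bproj E" f f0 F] by simp

lemma nrm_tendsto: "(f \<longlongrightarrow> f0) F \<Longrightarrow> ((\<lambda>i. bnorm E (f i)) \<longlongrightarrow> bnorm E f0) F"
  using bb_parts(5)[OF bb] continuous_on_tendsto_compose[of UNIV "bnorm E" f f0 F] by simp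

lemma badd_tendsto:
  assumes "(u \<longlongrightarrow> u0) F" "(v \<longlongrightarrow> v0) F" "eventually (\<lambda>i. bproj E (u i) = bproj E (v i)) F"
    "bproj E u0 = bproj E v0"
  shows "((\<lambda>i. badd E (u i) (v i)) \<longlongrightarrow> badd E u0 v0) F"
proof -
  have "((\<lambda>i. (\<lambda>(a, b). badd E a b) (u i, v i)) \<longlongrightarrow> (\<lambda>(a, b). badd E a b) (u0, v0)) F"
    by (rule continuous_on_tendsto_compose[OF bb_parts(3)[OF bb]])
      (use assms in \<open>auto intro: tendsto_Pair\<close>)
  thus ?thesis by simp
qed

lemma bscale_tendsto:
  assumes "(u \<longlongrightarrow> u0) F"
  shows "((\<lambda>i. bscale E c (u i)) \<longlongrightarrow> bscale E c u0) F"
proof -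
  have "((\<lambda>i. (\<lambda>(c, a). bscale E c a) (c, u i)) \<longlongrightarrow> (\<lambda>(c, a). bscale E c a) (c, u0)) F"
    by (rule continuous_on_tendsto_compose[OF bb_parts(4)[OF bb]])
      (use assms in \<open>auto intro: tendsto_Pair\<close>)
  thus ?thesis by simp
qed

lemma bsub_tendsto:
  assumes "(u \<longlongrightarrow> u0) F" "(v \<longlongrightarrow> v0) F" "eventually (\<lambda>i. bproj E (u i) = bproj E (v i)) F"
    "bproj E u0 = bproj E v0"
  shows "((\<lambda>i. bsub E (u i) (v i)) \<longlongrightarrow> bsub E u0 v0) F"
  unfolding bsub_def
  by (rule badd_tendsto) (use assms bscale_tendsto in \<open>auto simp: p_bscale[OF bb]\<close>)

lemma zero_tendsto:
  assumes "((\<lambda>i. bproj E (u i)) \<longlongrightarrow> x) F" "((\<lambda>i. bnorm E (u i)) \<longlongrightarrow> 0) F"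
  shows "(u \<longlongrightarrow> bzero E x) F"
proof -
  have "filterlim (bproj E) (nhds x) (filtermap u F)" using assms(1) by (simp add: filterlim_filtermap)
  moreover have "((bnorm E) \<longlongrightarrow> 0) (filtermap u F)" using assms(2) by (simp add: filterlim_filtermap)
  ultimately have "((\<lambda>e. e) \<longlongrightarrow> bzero E x) (filtermap u F)" by (rule bb_parts(6)[OF bb])
  thus ?thesis by (simp add: filterlim_filtermap)
qed

lemma fell_conv:
  assumes f: "(f \<longlongrightarrow> f0) F" and ev: "eventually (\<lambda>i. bproj E (x i) = bproj E (f i)) F"
    and n: "((\<lambda>i. bnorm E (bsub E (x i) (f i))) \<longlongrightarrow> 0) F"
  shows "(x \<longlongrightarrow> f0) F"
proof -
  have pd: "eventually (\<lambda>i. bproj E (bsub E (x i) (f i)) = bproj E (f i)) F"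
    using ev by eventually_elim (simp add: p_bsub[OF bb])
  have "((\<lambda>i. bproj E (bsub E (x i) (f i))) \<longlongrightarrow> bproj E f0) F"
    using tendsto_cong[OF pd] p_tendsto[OF f] by simp
  then have d: "((\<lambda>i. bsub E (x i) (f i)) \<longlongrightarrow> bzero E (bproj E f0)) F"
    by (rule zero_tendsto[OF _ n])
  have lim: "((\<lambda>i. badd E (f i) (bsub E (x i) (f i))) \<longlongrightarrow> badd E f0 (bzero E (bproj E f0))) F"
    by (rule badd_tendsto[OF f d]) (use pd in \<open>auto simp: p_bzero[OF bb] elim: eventually_mono\<close>)
  have eq: "badd E f0 (bzero E (bproj E f0)) = f0"
    using bb_zr_r[OF bb] by simp
  have ev2: "eventually (\<lambda>i. badd E (f i) (bsub E (x i) (f i)) = x i) F"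
    using ev by eventually_elim (simp add: bb_add_sub[OF bb])
  have "((\<lambda>i. x i) \<longlongrightarrow> f0) F" using tendsto_cong[OF ev2, of f0] lim eq by simp
  thus ?thesis by simp
qed

lemma sub_nrm_tendsto0:
  assumes "(u \<longlongrightarrow> w) F" "(v \<longlongrightarrow> w) F" "eventually (\<lambda>i. bproj E (u i) = bproj E (v i)) F"
  shows "((\<lambda>i. bnorm E (bsub E (u i) (v i))) \<longlongrightarrow> 0) F"
proof -
  have "((\<lambda>i. bsub E (u i) (v i)) \<longlongrightarrow> bsub E w w) F" by (rule bsub_tendsto) (use assms in auto)
  then have "((\<lambda>i. bnorm E (bsub E (u i) (v i))) \<longlongrightarrow> bnorm E (bsub E w w)) F" by (rule nrm_tendsto)
  moreover have "bnorm E (bsub E w w) = 0"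
    using bb_sub_self[OF bb] by simp
  ultimately show ?thesis by simp
qed

end

definition liftF :: "('x, 'e, 'z) bbundle_scheme \<Rightarrow> 'i filter \<Rightarrow> ('i \<Rightarrow> 'x) \<Rightarrow> 'e::topological_space \<Rightarrow> ('i \<times> 'e) filter" where
  "liftF E F \<phi> b0 = (INF SW\<in>{(S, W). eventually (\<lambda>i. i \<in> S) F \<and> open W \<and> b0 \<in> W}.
      principal {(i, y). i \<in> fst SW \<and> y \<in> snd SW \<and> bproj E y = \<phi> i})"

lemma liftF_base:
  "eventually P (liftF E F \<phi> b0) \<longleftrightarrow>
     (\<exists>SW\<in>{(S, W). eventually (\<lambda>i. i \<in> S) F \<and> open W \<and> b0 \<in> W}.
        eventually P (principal {(i, y). i \<in> fst SW \<and> y \<in> snd SW \<and> bproj E y = \<phi> i}))"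
  unfolding liftF_def
proof (rule eventually_INF_base)
  show "{(S, W). eventually (\<lambda>i. i \<in> S) F \<and> open W \<and> b0 \<in> W} \<noteq> {}"
  proof -
    have "(UNIV, UNIV) \<in> {(S, W). eventually (\<lambda>i. i \<in> S) F \<and> open W \<and> b0 \<in> W}" by auto
    thus ?thesis by blast
  qed
next
  fix a b assume a: "a \<in> {(S, W). eventually (\<lambda>i. i \<in> S) F \<and> open W \<and> b0 \<in> W}"
    and b: "b \<in> {(S, W). eventually (\<lambda>i. i \<in> S) F \<and> open W \<and> b0 \<in> W}"
  show "\<exists>x\<in>{(S, W). eventually (\<lambda>i. i \<in> S) F \<and> open W \<and> b0 \<in> W}.
          principal {(i, y). i \<in> fst x \<and> y \<in> snd x \<and> bproj E y = \<phi> i}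
          \<le> inf (principal {(i, y). i \<in> fst a \<and> y \<in> snd a \<and> bproj E y = \<phi> i})
                (principal {(i, y). i \<in> fst b \<and> y \<in> snd b \<and> bproj E y = \<phi> i})"
    apply (rule bexI[of _ "(fst a \<inter> fst b, snd a \<inter> snd b)"])
    using a b by (auto simp: inf_principal eventually_conj_iff)
qed

lemma liftF_fst: "eventually P F \<Longrightarrow> eventually (\<lambda>z. P (fst z)) (liftF E F \<phi> b0)"
  unfolding liftF_base
  by (rule bexI[of _ "({i. P i}, UNIV)"]) (auto simp: eventually_principal)

lemma liftF_snd: "(snd \<longlongrightarrow> b0) (liftF E F \<phi> b0)"
  unfolding tendsto_def liftF_base
proof (intro allI impI)
  fix S :: "'b set" assume "open S" "b0 \<in> S"
  then show "\<exists>SW\<in>{(S, W). eventually (\<lambda>i. i \<in> S) F \<and> open W \<and> b0 \<in> W}.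
     eventually (\<lambda>x. snd x \<in> S) (principal {(i, y). i \<in> fst SW \<and> y \<in> snd SW \<and> bproj E y = \<phi> i})"
    by (intro bexI[of _ "(UNIV, S)"]) (auto simp: eventually_principal)
qed

lemma liftF_proj: "eventually (\<lambda>z. bproj E (snd z) = \<phi> (fst z)) (liftF E F \<phi> b0)"
  unfolding liftF_base
  by (rule bexI[of _ "(UNIV, UNIV)"]) (auto simp: eventually_principal)

lemma liftF_back:
  assumes bb: "banach_bundle E" and phi: "(\<phi> \<longlongrightarrow> bproj E b0) F"
    and ev: "eventually (\<lambda>z. Q (fst z)) (liftF E F \<phi> b0)"
  shows "eventually Q F"
proof -
  from ev[unfolded liftF_base] obtain S W where SW: "eventually (\<lambda>i. i \<in> S) F" "open W" "b0 \<in> W"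
    and sub: "\<forall>z\<in>{(i, y). i \<in> S \<and> y \<in> W \<and> bproj E y = \<phi> i}. Q (fst z)"
    by (auto simp: eventually_principal)
  have "open (bproj E ` W)" using bb_parts(2)[OF bb] SW by blast
  moreover have "bproj E b0 \<in> bproj E ` W" using SW by blast
  ultimately have "eventually (\<lambda>i. \<phi> i \<in> bproj E ` W) F" using phi tendsto_def by blast
  then show ?thesis using SW(1)
  proof eventually_elim
    case (elim i)
    then obtain y where "y \<in> W" "bproj E y = \<phi> i" by auto
    then show "Q i" using sub elim by auto
  qed
qed



section \<open>Groupoid facts\<close>

context
  fixes Gr :: "('g::topological_space, 'x::topological_space) groupoid"
  assumes tg: "topological_groupoid Gr"
begin

lemmas tgD = tg[unfolded topological_groupoid_def]

lemma src_unit[simp]: "src Gr (unit Gr x) = x" using tgD[THEN conjunct1] by blast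
lemma tgt_unit[simp]: "tgt Gr (unit Gr x) = x" using tgD[THEN conjunct1] by blast
lemma src_mul: "src Gr g = tgt Gr h \<Longrightarrow> src Gr (gmul Gr g h) = src Gr h" using tgD[THEN conjunct2, THEN conjunct1] by blast
lemma tgt_mul: "src Gr g = tgt Gr h \<Longrightarrow> tgt Gr (gmul Gr g h) = tgt Gr g" using tgD[THEN conjunct2, THEN conjunct1] by blast
lemma gassoc: "src Gr g = tgt Gr h \<Longrightarrow> src Gr h = tgt Gr k \<Longrightarrow>
    gmul Gr (gmul Gr g h) k = gmul Gr g (gmul Gr h k)" using tgD[THEN conjunct2, THEN conjunct2, THEN conjunct1] by blast
lemma unit_mul: "gmul Gr (unit Gr (tgt Gr g)) g = g" using tgD[THEN conjunct2, THEN conjunct2, THEN conjunct2, THEN conjunct1] by blast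
lemma mul_unit: "gmul Gr g (unit Gr (src Gr g)) = g" using tgD[THEN conjunct2, THEN conjunct2, THEN conjunct2, THEN conjunct1] by blast
lemma src_inv[simp]: "src Gr (ginv Gr g) = tgt Gr g" using tgD[THEN conjunct2, THEN conjunct2, THEN conjunct2, THEN conjunct2, THEN conjunct1] by blast
lemma tgt_inv[simp]: "tgt Gr (ginv Gr g) = src Gr g" using tgD[THEN conjunct2, THEN conjunct2, THEN conjunct2, THEN conjunct2, THEN conjunct1] by blast
lemma mul_inv: "gmul Gr g (ginv Gr g) = unit Gr (tgt Gr g)" using tgD[THEN conjunct2, THEN conjunct2, THEN conjunct2, THEN conjunct2, THEN conjunct1] by blast
lemma inv_mul: "gmul Gr (ginv Gr g) g = unit Gr (src Gr g)" using tgD[THEN conjunct2, THEN conjunct2, THEN conjunct2, THEN conjunct2, THEN conjunct1] by blast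
lemma cont_src: "continuous_on UNIV (src Gr)" using tgD[THEN conjunct2, THEN conjunct2, THEN conjunct2, THEN conjunct2, THEN conjunct2, THEN conjunct1] by blast
lemma cont_tgt: "continuous_on UNIV (tgt Gr)" using tgD[THEN conjunct2, THEN conjunct2, THEN conjunct2, THEN conjunct2, THEN conjunct2, THEN conjunct2, THEN conjunct1] by blast
lemma cont_inv: "continuous_on UNIV (ginv Gr)" using tgD[THEN conjunct2, THEN conjunct2, THEN conjunct2, THEN conjunct2, THEN conjunct2, THEN conjunct2, THEN conjunct2, THEN conjunct2, THEN conjunct1] by blast

lemma inv_inv[simp]: "ginv Gr (ginv Gr g) = g"
proof -
  let ?h = "ginv Gr g" let ?k = "ginv Gr ?h"
  have "?k = gmul Gr ?k (unit Gr (src Gr ?k))" by (simp only: mul_unit)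
  also have "\<dots> = gmul Gr ?k (gmul Gr ?h g)" using inv_mul[of g] by simp
  also have "\<dots> = gmul Gr (gmul Gr ?k ?h) g" using gassoc[of ?k ?h g] by simp
  also have "\<dots> = gmul Gr (unit Gr (tgt Gr g)) g" using inv_mul[of ?h] by simp
  also have "\<dots> = g" by (rule unit_mul)
  finally show ?thesis .
qed

lemma orbit_self: "x \<in> orbit Gr x"
  unfolding orbit_def by (rule image_eqI[of _ _ "unit Gr x"]) auto

lemma orbit_src: "src Gr g \<in> orbit Gr (tgt Gr g)"
  unfolding orbit_def by (rule image_eqI[of _ _ "ginv Gr g"]) auto

lemma tendsto_src: "(f \<longlongrightarrow> g0) F \<Longrightarrow> ((\<lambda>i. src Gr (f i)) \<longlongrightarrow> src Gr g0) F"
  using continuous_on_tendsto_compose[OF cont_src] by fastforce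
lemma tendsto_tgt: "(f \<longlongrightarrow> g0) F \<Longrightarrow> ((\<lambda>i. tgt Gr (f i)) \<longlongrightarrow> tgt Gr g0) F"
  using continuous_on_tendsto_compose[OF cont_tgt] by fastforce
lemma tendsto_inv: "(f \<longlongrightarrow> g0) F \<Longrightarrow> ((\<lambda>i. ginv Gr (f i)) \<longlongrightarrow> ginv Gr g0) F"
  using continuous_on_tendsto_compose[OF cont_inv] by fastforce

end

section \<open>Algebra bundle facts\<close>

context
  fixes A :: "('x::topological_space, 'a::topological_space) babundle"
  assumes ba: "banach_algebra_bundle A"
begin

lemmas baD = ba[unfolded banach_algebra_bundle_def]

lemma ba_bb: "banach_bundle A" using baD[THEN conjunct1] .
lemma ba_cmul: "continuous_on {(a, b). bproj A a = bproj A b} (\<lambda>(a, b). amul A a b)" using baD[THEN conjunct2, THEN conjunct1] .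
lemma ba_cone: "continuous_on UNIV (aone A)" using baD[THEN conjunct2, THEN conjunct2, THEN conjunct1] .
lemmas baX = baD[THEN conjunct2, THEN conjunct2, THEN conjunct2]

lemma one_fib[simp]: "aone A x \<in> fib A x" using baX by blast
lemma p_one[simp]: "bproj A (aone A x) = x" using one_fib by (simp add: in_fib)
lemma nrm_one[simp]: "bnorm A (aone A x) = 1" using baX by blast
lemma mul_fib: "a \<in> fib A x \<Longrightarrow> b \<in> fib A x \<Longrightarrow> amul A a b \<in> fib A x" using baX by blast
lemma mul_nrm: "a \<in> fib A x \<Longrightarrow> b \<in> fib A x \<Longrightarrow> bnorm A (amul A a b) \<le> bnorm A a * bnorm A b"
  using baX by blast
lemma mul_assoc: "a \<in> fib A x \<Longrightarrow> b \<in> fib A x \<Longrightarrow> c \<in> fib A x \<Longrightarrow>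
   amul A (amul A a b) c = amul A a (amul A b c)"
  using baX[rule_format, of x, THEN conjunct2, THEN conjunct2, THEN conjunct2, THEN conjunct1] by blast
lemma mul_addr: "a \<in> fib A x \<Longrightarrow> b \<in> fib A x \<Longrightarrow> c \<in> fib A x \<Longrightarrow>
   amul A a (badd A b c) = badd A (amul A a b) (amul A a c)"
  using baX[rule_format, of x, THEN conjunct2, THEN conjunct2, THEN conjunct2, THEN conjunct1] by blast
lemma mul_scr: "a \<in> fib A x \<Longrightarrow> b \<in> fib A x \<Longrightarrow>
   amul A a (bscale A r b) = bscale A r (amul A a b)"
  using baX[rule_format, of x, THEN conjunct2, THEN conjunct2, THEN conjunct2, THEN conjunct2, THEN conjunct1] by blast
lemma one_mul: "a \<in> fib A x \<Longrightarrow> amul A (aone A x) a = a"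
  using baX[rule_format, of x, THEN conjunct2, THEN conjunct2, THEN conjunct2, THEN conjunct2, THEN conjunct2] by blast
lemma mul_one: "a \<in> fib A x \<Longrightarrow> amul A a (aone A x) = a"
  using baX[rule_format, of x, THEN conjunct2, THEN conjunct2, THEN conjunct2, THEN conjunct2, THEN conjunct2] by blast

lemma mul_subr: assumes "a \<in> fib A x" "b \<in> fib A x" "c \<in> fib A x"
  shows "amul A a (bsub A b c) = bsub A (amul A a b) (amul A a c)"
proof -
  interpret bfib A x by (rule bb_fiber[OF ba_bb])
  show ?thesis unfolding bsub_def using assms by (simp add: mul_addr mul_scr)
qed

lemma ainv_props:
  assumes "a_invertible A a"
  shows "ainv A a \<in> fib A (bproj A a)" "amul A a (ainv A a) = aone A (bproj A a)"
    "amul A (ainv A a) a = aone A (bproj A a)"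
proof -
  let ?x = "bproj A a"
  have a: "a \<in> fib A ?x" by simp
  obtain b where b: "b \<in> fib A ?x" "amul A a b = aone A ?x" "amul A b a = aone A ?x"
    using assms unfolding a_invertible_def by blast
  have uniq: "c = b" if c: "c \<in> fib A ?x" "amul A a c = aone A ?x" "amul A c a = aone A ?x" for c
  proof -
    have "c = amul A c (amul A a b)" using c b mul_one by simp
    also have "\<dots> = amul A (amul A c a) b" using mul_assoc[OF c(1) a b(1)] by simp
    also have "\<dots> = b" using c b one_mul by simp
    finally show ?thesis .
  qed
  have "ainv A a = b" unfolding ainv_def
  proof (rule the_equality)
    show "b \<in> fib A ?x \<and> amul A a b = aone A ?x \<and> amul A b a = aone A ?x" using b by blast
  next
    fix c assume "c \<in> fib A ?x \<and> amul A a c = aone A ?x \<and> amul A c a = aone A ?x"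
    then show "c = b" using uniq by blast
  qed
  then show "ainv A a \<in> fib A ?x" "amul A a (ainv A a) = aone A ?x" "amul A (ainv A a) a = aone A ?x"
    using b by auto
qed

end

section \<open>Module facts\<close>

context
  fixes A :: "('x::topological_space, 'a::topological_space) babundle"
    and E :: "('x, 'e::topological_space) bbundle" and m
  assumes mb: "module_bundle A E m"
begin

lemmas mbD = mb[unfolded module_bundle_def]
lemma mb_bb: "banach_bundle E" using mbD[THEN conjunct1] .
lemma mb_cont: "continuous_on {(a, e). bproj A a = bproj E e} (\<lambda>(a, e). m a e)" using mbD[THEN conjunct2, THEN conjunct1] .
lemmas mbX = mbD[THEN conjunct2, THEN conjunct2, THEN conjunct1]
lemma m_one: "e \<in> fib E x \<Longrightarrow> m (aone A x) e = e" using mbD[THEN conjunct2, THEN conjunct2, THEN conjunct2] by blast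

lemma m_fib: "a \<in> fib A x \<Longrightarrow> e \<in> fib E x \<Longrightarrow> m a e \<in> fib E x" using mbX by blast
lemma m_nrm: "a \<in> fib A x \<Longrightarrow> e \<in> fib E x \<Longrightarrow> bnorm E (m a e) \<le> bnorm A a * bnorm E e" using mbX by blast
lemma m_mul: "a \<in> fib A x \<Longrightarrow> b \<in> fib A x \<Longrightarrow> e \<in> fib E x \<Longrightarrow> m (amul A a b) e = m a (m b e)"
  using mbX by blast
lemma m_add: "a \<in> fib A x \<Longrightarrow> e \<in> fib E x \<Longrightarrow> e' \<in> fib E x \<Longrightarrow> m a (badd E e e') = badd E (m a e) (m a e')"
  using mbX by blast
lemma m_sc: "a \<in> fib A x \<Longrightarrow> e \<in> fib E x \<Longrightarrow> m a (bscale E r e) = bscale E r (m a e)"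
  using mbX by blast
lemma m_sub: assumes "a \<in> fib A x" "e \<in> fib E x" "e' \<in> fib E x"
  shows "m a (bsub E e e') = bsub E (m a e) (m a e')"
proof -
  interpret bfib E x by (rule bb_fiber[OF mb_bb])
  show ?thesis unfolding bsub_def using assms by (simp add: m_add m_sc)
qed

end

section \<open>Operator norms\<close>

lemma bb_nrm_nonneg: assumes "banach_bundle E" shows "0 \<le> bnorm E e"
proof -
  interpret bfib E "bproj E e" by (rule bb_fiber[OF assms])
  show ?thesis by simp
qed

lemma opnorm_nonneg: assumes "banach_bundle E" "banach_bundle F" shows "0 \<le> opnorm E F x h"
proof -
  have "ereal (bnorm F (h (bzero E x))) \<le> opnorm E F x h"
    unfolding opnorm_def
    by (rule SUP_upper) (use p_bzero[OF assms(1)] bfib.nrm_zr[OF bb_fiber[OF assms(1)]] in \<open>auto simp: in_fib\<close>)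
  moreover have "0 \<le> bnorm F (h (bzero E x))" by (rule bb_nrm_nonneg[OF assms(2)])
  ultimately show ?thesis by (meson ereal_less_eq(5) order_trans)
qed

lemma opnorm_le:
  assumes "\<And>a. a \<in> fib E x \<Longrightarrow> bnorm F (h a) \<le> C * bnorm E a" "0 \<le> C"
  shows "opnorm E F x h \<le> ereal C"
  unfolding opnorm_def
proof (rule SUP_least)
  fix a assume "a \<in> {a \<in> fib E x. bnorm E a \<le> 1}"
  then have "bnorm F (h a) \<le> C * 1" using assms(1)[of a] mult_left_mono[OF _ assms(2), of "bnorm E a" 1] by auto
  then show "ereal (bnorm F (h a)) \<le> ereal C" by simp
qed

lemma opnorm_apply:
  assumes bE: "banach_bundle E" and bF: "banach_bundle F"
    and hV: "\<And>a. a \<in> fib E x \<Longrightarrow> h a \<in> fib F y"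
    and hs: "\<And>c a. a \<in> fib E x \<Longrightarrow> h (bscale E c a) = bscale F c (h a)"
    and le: "opnorm E F x h \<le> ereal C" and a: "a \<in> fib E x"
  shows "bnorm F (h a) \<le> C * bnorm E a"
proof -
  interpret X: bfib E x by (rule bb_fiber[OF bE])
  interpret Y: bfib F y by (rule bb_fiber[OF bF])
  show ?thesis
  proof (cases "bnorm E a = 0")
    case True
    then have "a = bzero E x" using X.nrm_zero_iff a by blast
    then have "h a = bscale F 0 (h a)" using hs[of "bzero E x" 0] X.sc0 by simp
    then have "bnorm F (h a) = 0" using Y.nrm_sc[of "h a" 0] hV[OF a] by simp
    then show ?thesis using True by simp
  next
    case False
    let ?n = "bnorm E a"
    have n: "?n > 0" using False X.nrm_nonneg[OF a] by simp
    let ?a = "bscale E (1 / ?n) a"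
    have "?a \<in> fib E x" using a by simp
    moreover have "bnorm E ?a = 1" using a n by simp
    ultimately have "ereal (bnorm F (h ?a)) \<le> opnorm E F x h" unfolding opnorm_def
      by (intro SUP_upper) auto
    then have "bnorm F (h ?a) \<le> C" using le by (meson ereal_less_eq(3) order_trans)
    moreover have "bnorm F (h ?a) = bnorm F (h a) / ?n" using hs[OF a] Y.nrm_sc hV[OF a] n by simp
    ultimately show ?thesis using n by (simp add: divide_le_eq mult.commute)
  qed
qed



lemma ereal_split2:
  fixes O1 O2 D1 D2 :: ereal and l r :: real
  assumes "0 \<le> O1" "0 \<le> O2" "O1 \<le> D1" "ereal l * O2 \<le> D2" "D1 + D2 = ereal r" "1 \<le> l"
  shows "\<exists>a1 a2. O1 = ereal a1 \<and> O2 = ereal a2 \<and> a1 + l * a2 \<le> r"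
proof -
  have "0 \<le> ereal l * O2" using assms(2,6) by simp
  then have d2: "0 \<le> D2" using assms(4) by (rule order_trans)
  have d1: "0 \<le> D1" using assms(1,3) by (rule order_trans)
  obtain d1' d2' where D: "D1 = ereal d1'" "D2 = ereal d2'"
    using d1 d2 assms(5) by (cases D1; cases D2) auto
  obtain a1 where a1: "O1 = ereal a1" using assms(1,3) D by (cases O1) auto
  obtain a2 where a2: "O2 = ereal a2" using assms(2,4,6) D by (cases O2) auto
  have "a1 + l * a2 \<le> d1' + d2'" using assms(3,4) a1 a2 D by simp
  also have "\<dots> = r" using assms(5) D by simp
  finally show ?thesis using a1 a2 by blast
qed

locale setting =
  fixes Gr :: "('g::t2_space, 'x::topological_space) groupoid"
    and \<mu> :: "'x \<Rightarrow> 'g measure"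
    and A :: "('x, 'a::t2_space) babundle"
    and act :: "'g \<Rightarrow> 'a \<Rightarrow> 'a"
    and E :: "('x, 'e::t2_space) bbundle"
    and m :: "'a \<Rightarrow> 'e \<Rightarrow> 'e"
    and \<sigma> :: "'g \<Rightarrow> 'g \<Rightarrow> 'a"
    and T :: "'g \<Rightarrow> 'e \<Rightarrow> 'e"
  assumes lcg: "locally_compact_groupoid Gr \<mu>"
    and agb: "algebra_G_bundle Gr A act"
    and mb: "module_bundle A E m"
    and mlt: "multiplier Gr A act \<sigma>"
    and alin: "A_linear Gr A E act m T"
    and ar: "almost_representation Gr A E m \<sigma> T"
begin

lemma tg: "topological_groupoid Gr" using lcg unfolding locally_compact_groupoid_def by blast
lemmas gsimps[simp] = src_unit[OF tg] tgt_unit[OF tg] src_inv[OF tg] tgt_inv[OF tg] inv_inv[OF tg] orbit_self[OF tg]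
lemma quarter: "(1 / 4 :: ereal) = ereal (1 / 4)"
  by (simp add: one_ereal_def | metis ereal_divide one_ereal_def numeral_eq_ereal zero_neq_numeral)
lemmas agbD = agb[unfolded algebra_G_bundle_def]
lemma ba: "banach_algebra_bundle A" using agbD[THEN conjunct1] .
lemma bbA: "banach_bundle A" using ba_bb[OF ba] .
lemma bbE: "banach_bundle E" using mb_bb[OF mb] .
lemma act_cont: "continuous_on {(g, a). bproj A a = src Gr g} (\<lambda>(g, a). act g a)" using agbD[THEN conjunct2, THEN conjunct1] .
lemmas actX = agbD[THEN conjunct2, THEN conjunct2, THEN conjunct1]
lemma act_fib: "a \<in> fib A (src Gr g) \<Longrightarrow> act g a \<in> fib A (tgt Gr g)"
  using actX by (meson bij_betw_apply)
lemma act_nrm: "a \<in> fib A (src Gr g) \<Longrightarrow> bnorm A (act g a) = bnorm A a"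
  using actX by blast
lemma act_unit: "act (unit Gr (bproj A a)) a = a" using agbD[THEN conjunct2, THEN conjunct2, THEN conjunct2, THEN conjunct1] by blast
lemma act_comp: "src Gr g = tgt Gr h \<Longrightarrow> bproj A a = src Gr h \<Longrightarrow> act (gmul Gr g h) a = act g (act h a)"
  using agbD[THEN conjunct2, THEN conjunct2, THEN conjunct2, THEN conjunct2] by blast

lemmas mltD = mlt[unfolded multiplier_def]
lemma sig_cont: "continuous_on (composable Gr) (\<lambda>(g, h). \<sigma> g h)" using mltD[THEN conjunct1] .
lemma sig_fib: "src Gr g = tgt Gr h \<Longrightarrow> \<sigma> g h \<in> fib A (tgt Gr g)" using mltD[THEN conjunct2, THEN conjunct1] by blast
lemma sig_inv: "src Gr g = tgt Gr h \<Longrightarrow> a_invertible A (\<sigma> g h)" using mltD[THEN conjunct2, THEN conjunct1] by blast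
lemma sig_p: "src Gr g = tgt Gr h \<Longrightarrow> bproj A (\<sigma> g h) = tgt Gr g" using sig_fib by (simp add: in_fib)

lemma A_lin: "a \<in> fib A (src Gr g) \<Longrightarrow> e \<in> fib E (src Gr g) \<Longrightarrow> T g (m a e) = m (act g a) (T g e)"
  using alin unfolding A_linear_def by blast

lemmas arD = ar[unfolded almost_representation_def pullback_morphism_def fib_bounded_linear_def]
lemma T_cont: "continuous_on {(g, e). bproj E e = src Gr g} (\<lambda>(g, e). (g, T g e))"
  using arD[THEN conjunct1, THEN conjunct2] .
lemmas TX = arD[THEN conjunct1, THEN conjunct1]
lemma T_fib: "e \<in> fib E (src Gr g) \<Longrightarrow> T g e \<in> fib E (tgt Gr g)" using TX by blast
lemma T_add: "a \<in> fib E (src Gr g) \<Longrightarrow> b \<in> fib E (src Gr g) \<Longrightarrow> T g (badd E a b) = badd E (T g a) (T g b)"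
  using TX by blast
lemma T_sc: "a \<in> fib E (src Gr g) \<Longrightarrow> T g (bscale E c a) = bscale E c (T g a)" using TX by blast
lemma T_bnd: "\<exists>K. \<forall>a\<in>fib E (src Gr g). bnorm E (T g a) \<le> K * bnorm E a" using TX by blast
lemma defect_le: "defect Gr A E m \<sigma> T x \<le> 1 / 4" using arD[THEN conjunct2] by blast

lemma T_sub: assumes "a \<in> fib E (src Gr g)" "b \<in> fib E (src Gr g)"
  shows "T g (bsub E a b) = bsub E (T g a) (T g b)"
proof -
  interpret bfib E "src Gr g" by (rule bb_fiber[OF bbE])
  show ?thesis unfolding bsub_def using assms by (simp add: T_add T_sc)
qed
lemma T_zero: "T g (bzero E (src Gr g)) = bzero E (tgt Gr g)"
proof -
  interpret X: bfib E "src Gr g" by (rule bb_fiber[OF bbE])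
  interpret Y: bfib E "tgt Gr g" by (rule bb_fiber[OF bbE])
  have "T g (bscale E 0 (bzero E (src Gr g))) = bscale E 0 (T g (bzero E (src Gr g)))"
    by (rule T_sc) simp
  then show ?thesis using T_fib[of "bzero E (src Gr g)" g] by simp
qed

lemma nrm_nonneg: "0 \<le> bnorm E e" by (rule bb_nrm_nonneg[OF bbE])
lemma nrmA_nonneg: "0 \<le> bnorm A e" by (rule bb_nrm_nonneg[OF bbA])

definition rr :: "'x \<Rightarrow> real" where "rr x = real_of_ereal (defect Gr A E m \<sigma> T x)"

lemma opn_nonneg: "0 \<le> opnorm E E y h" by (rule opnorm_nonneg[OF bbE bbE])

lemma ell_ge1: "1 \<le> ell Gr A \<sigma> g" unfolding ell_def by simp

lemma defect_nonneg: "0 \<le> defect Gr A E m \<sigma> T x"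
proof -
  have "0 \<le> opnorm E E x (\<lambda>e. bsub E e (T (unit Gr x) e))" by (rule opn_nonneg)
  also have "\<dots> \<le> (SUP y\<in>orbit Gr x. opnorm E E y (\<lambda>e. bsub E e (T (unit Gr y) e)))"
    by (rule SUP_upper) (rule orbit_self[OF tg])
  finally have 1: "0 \<le> (SUP y\<in>orbit Gr x. opnorm E E y (\<lambda>e. bsub E e (T (unit Gr y) e)))" .
  let ?P = "{(g, h). tgt Gr g \<in> orbit Gr x \<and> tgt Gr h = src Gr g}"
  let ?f = "\<lambda>gh. ereal (ell Gr A \<sigma> (fst gh)) *
        opnorm E E (src Gr (snd gh))
          (\<lambda>e. bsub E (m (\<sigma> (fst gh) (snd gh)) (T (gmul Gr (fst gh) (snd gh)) e))
                       (T (fst gh) (T (snd gh) e)))"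
  have "(unit Gr x, unit Gr x) \<in> ?P" using orbit_self[OF tg] by simp
  then have "?f (unit Gr x, unit Gr x) \<le> (SUP gh\<in>?P. ?f gh)" by (rule SUP_upper)
  moreover have "0 \<le> ?f (unit Gr x, unit Gr x)"
  proof -
    have "0 \<le> ereal (ell Gr A \<sigma> (unit Gr x))" using ell_ge1[of "unit Gr x"] by simp
    then show ?thesis using opn_nonneg by (simp add: ereal_zero_le_0_iff | rule mult_nonneg_nonneg)
  qed
  ultimately have 2: "0 \<le> (SUP gh\<in>?P. ?f gh)" by (rule order_trans[rotated])
  show ?thesis unfolding defect_def using 1 2 by simp
qed

lemma defect_eq: "defect Gr A E m \<sigma> T x = ereal (rr x)" "0 \<le> rr x" "rr x \<le> 1 / 4"
proof -
  have "defect Gr A E m \<sigma> T x \<noteq> \<infinity>" "defect Gr A E m \<sigma> T x \<noteq> -\<infinity>"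
    using defect_le[of x] defect_nonneg[of x] unfolding quarter by auto
  then show "defect Gr A E m \<sigma> T x = ereal (rr x)" unfolding rr_def by (cases "defect Gr A E m \<sigma> T x") auto
  then show "0 \<le> rr x" "rr x \<le> 1 / 4" using defect_le[of x] defect_nonneg[of x] unfolding quarter by auto
qed

lemma defect_split:
  assumes y: "y \<in> orbit Gr x" and h: "tgt Gr h \<in> orbit Gr x" and k: "tgt Gr k = src Gr h"
  shows "\<exists>a1 a2. 0 \<le> a1 \<and> 0 \<le> a2 \<and> a1 + ell Gr A \<sigma> h * a2 \<le> rr x \<and>
     (\<forall>e\<in>fib E y. bnorm E (bsub E e (T (unit Gr y) e)) \<le> a1 * bnorm E e) \<and>
     (\<forall>e\<in>fib E (src Gr k). bnorm E (bsub E (m (\<sigma> h k) (T (gmul Gr h k) e)) (T h (T k e))) \<le> a2 * bnorm E e)"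
proof -
  let ?h1 = "\<lambda>e. bsub E e (T (unit Gr y) e)"
  let ?h2 = "\<lambda>e. bsub E (m (\<sigma> h k) (T (gmul Gr h k) e)) (T h (T k e))"
  let ?O1 = "opnorm E E y ?h1"
  let ?O2 = "opnorm E E (src Gr k) ?h2"
  let ?P = "{(g, h). tgt Gr g \<in> orbit Gr x \<and> tgt Gr h = src Gr g}"
  let ?f = "\<lambda>gh. ereal (ell Gr A \<sigma> (fst gh)) *
        opnorm E E (src Gr (snd gh))
          (\<lambda>e. bsub E (m (\<sigma> (fst gh) (snd gh)) (T (gmul Gr (fst gh) (snd gh)) e))
                       (T (fst gh) (T (snd gh) e)))"
  let ?D1 = "(SUP y\<in>orbit Gr x. opnorm E E y (\<lambda>e. bsub E e (T (unit Gr y) e)))"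
  let ?D2 = "(SUP gh\<in>?P. ?f gh)"
  have O1: "?O1 \<le> ?D1" by (rule SUP_upper[OF y])
  have hk: "(h, k) \<in> ?P" using h k by simp
  have O2: "ereal (ell Gr A \<sigma> h) * ?O2 \<le> ?D2" using SUP_upper[OF hk, of ?f] by simp
  have D: "?D1 + ?D2 = ereal (rr x)" using defect_eq(1)[of x] unfolding defect_def by simp
  obtain a1 a2 where a: "?O1 = ereal a1" "?O2 = ereal a2" "a1 + ell Gr A \<sigma> h * a2 \<le> rr x"
    using ereal_split2[OF opn_nonneg opn_nonneg O1 O2 D ell_ge1] by blast
  have a1: "0 \<le> a1" using opn_nonneg[of y ?h1] a by simp
  have a2: "0 \<le> a2" using opn_nonneg[of "src Gr k" ?h2] a by simp
  have src_hk: "src Gr (gmul Gr h k) = src Gr k" "tgt Gr (gmul Gr h k) = tgt Gr h"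
    using src_mul[OF tg] tgt_mul[OF tg] k by auto
  have B1: "\<forall>e\<in>fib E y. bnorm E (?h1 e) \<le> a1 * bnorm E e"
  proof
    fix e assume e: "e \<in> fib E y"
    interpret Y: bfib E y by (rule bb_fiber[OF bbE])
    show "bnorm E (?h1 e) \<le> a1 * bnorm E e"
    proof (rule opnorm_apply[OF bbE bbE, of y ?h1 y])
      show "?h1 a \<in> fib E y" if "a \<in> fib E y" for a using that T_fib[of a "unit Gr y"] tg by simp
      show "?h1 (bscale E c a) = bscale E c (?h1 a)" if "a \<in> fib E y" for c a
        using that T_fib[of a "unit Gr y"] T_sc[of a "unit Gr y" c] tg by (simp add: Y.sc_sub)
    qed (use a e in auto)
  qed
  have B2: "\<forall>e\<in>fib E (src Gr k). bnorm E (?h2 e) \<le> a2 * bnorm E e"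
  proof
    fix e assume e: "e \<in> fib E (src Gr k)"
    interpret Y: bfib E "tgt Gr h" by (rule bb_fiber[OF bbE])
    have sf: "\<sigma> h k \<in> fib A (tgt Gr h)" using sig_fib k by simp
    have mem: "m (\<sigma> h k) (T (gmul Gr h k) a) \<in> fib E (tgt Gr h)" "T h (T k a) \<in> fib E (tgt Gr h)"
      if "a \<in> fib E (src Gr k)" for a
      using m_fib[OF mb sf] T_fib[of a "gmul Gr h k"] src_hk T_fib[of a k] T_fib[of "T k a" h] k that by auto
    show "bnorm E (?h2 e) \<le> a2 * bnorm E e"
    proof (rule opnorm_apply[OF bbE bbE, of "src Gr k" ?h2 "tgt Gr h"])
      show "?h2 a \<in> fib E (tgt Gr h)" if "a \<in> fib E (src Gr k)" for a using mem[OF that] by simp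
      show "?h2 (bscale E c a) = bscale E c (?h2 a)" if "a \<in> fib E (src Gr k)" for c a
      proof -
        have "T (gmul Gr h k) (bscale E c a) = bscale E c (T (gmul Gr h k) a)" using T_sc that src_hk by simp
        moreover have "T k (bscale E c a) = bscale E c (T k a)" using T_sc that by simp
        moreover have "T h (bscale E c (T k a)) = bscale E c (T h (T k a))" using T_sc[of "T k a" h c] T_fib[of a k] that k by simp
        moreover have "m (\<sigma> h k) (bscale E c (T (gmul Gr h k) a)) = bscale E c (m (\<sigma> h k) (T (gmul Gr h k) a))"
          using m_sc[OF mb sf] T_fib[of a "gmul Gr h k"] src_hk that by simp
        ultimately show ?thesis using Y.sc_sub mem[OF that] by simp
      qed
    qed (use a e in auto)
  qed
  show ?thesis using a1 a2 a(3) B1 B2 by blast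
qed

lemma bound_pt:
  assumes "tgt Gr k \<in> orbit Gr x"
  shows "ereal (ell Gr A \<sigma> k) * opnorm E E (src Gr k) (T k) \<le> bound Gr A E \<sigma> T x"
  unfolding bound_def by (rule SUP_upper[of k, where f="\<lambda>g. ereal (ell Gr A \<sigma> g) * opnorm E E (src Gr g) (T g)"]) (use assms in simp)

lemma combine:
  assumes f: "f \<in> fib E z" and u: "u \<in> fib E z" and w: "w \<in> fib E z"
    and s: "s \<in> fib A z" and c: "c \<in> fib A z" and cs: "amul A c s = aone A z"
    and b1: "bnorm E (bsub E f u) \<le> a1 * bnorm E f"
    and b2: "bnorm E (bsub E (m s u) w) \<le> a2 * bnorm E f"
    and cl: "bnorm A c \<le> l" and ar: "a1 + l * a2 \<le> r" and a2: "0 \<le> a2"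
  shows "bnorm E (bsub E f (m c w)) \<le> r * bnorm E f"
proof -
  interpret Z: bfib E z by (rule bb_fiber[OF bbE])
  have su: "m s u \<in> fib E z" using m_fib[OF mb s u] .
  have "m c (m s u) = u" using m_mul[OF mb c s u, symmetric] cs m_one[OF mb u] by simp
  then have "bsub E u (m c w) = m c (bsub E (m s u) w)" using m_sub[OF mb c su w] by simp
  moreover have "bsub E f (m c w) = badd E (bsub E f u) (bsub E u (m c w))"
    using Z.sub_add_sub[OF f u m_fib[OF mb c w]] by simp
  ultimately have eq: "bsub E f (m c w) = badd E (bsub E f u) (m c (bsub E (m s u) w))" by simp
  have "bnorm E (m c (bsub E (m s u) w)) \<le> bnorm A c * bnorm E (bsub E (m s u) w)"
    by (rule m_nrm[OF mb c]) (use su w in simp)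
  also have "\<dots> \<le> l * (a2 * bnorm E f)"
    by (rule mult_mono[OF cl b2]) (use nrmA_nonneg nrm_nonneg a2 order_trans[OF nrmA_nonneg cl] in auto)
  finally have 2: "bnorm E (m c (bsub E (m s u) w)) \<le> l * (a2 * bnorm E f)" .
  have "bnorm E (bsub E f (m c w)) \<le> bnorm E (bsub E f u) + bnorm E (m c (bsub E (m s u) w))"
    unfolding eq by (rule Z.nrm_tri) (use f u c su w m_fib[OF mb] in auto)
  also have "\<dots> \<le> (a1 + l * a2) * bnorm E f" using b1 2 by (simp add: algebra_simps)
  also have "\<dots> \<le> r * bnorm E f" by (rule mult_right_mono[OF ar nrm_nonneg])
  finally show ?thesis .
qed

end



context setting
begin

definition ci where "ci g = ainv A (\<sigma> (ginv Gr g) g)"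
definition Lm where "Lm g e = m (ci g) (T (ginv Gr g) e)"
definition di where "di g = ainv A (\<sigma> g (ginv Gr g))"
definition Rm where "Rm g e = m (act (ginv Gr g) (di g)) (T (ginv Gr g) e)"
definition Tinv where "Tinv g e = (SOME f. f \<in> fib E (src Gr g) \<and> T g f = e)"

lemma ci_props: "ci g \<in> fib A (src Gr g)" "amul A (ci g) (\<sigma> (ginv Gr g) g) = aone A (src Gr g)"
  "bnorm A (ci g) \<le> ell Gr A \<sigma> (ginv Gr g)"
proof -
  have c: "src Gr (ginv Gr g) = tgt Gr g" by simp
  have p: "bproj A (\<sigma> (ginv Gr g) g) = src Gr g" using sig_p[OF c] by simp
  show "ci g \<in> fib A (src Gr g)" "amul A (ci g) (\<sigma> (ginv Gr g) g) = aone A (src Gr g)"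
    using ainv_props[OF ba sig_inv[OF c]] p unfolding ci_def by auto
  show "bnorm A (ci g) \<le> ell Gr A \<sigma> (ginv Gr g)" unfolding ell_def ci_def by simp
qed

lemma di_props: "di g \<in> fib A (tgt Gr g)" "amul A (di g) (\<sigma> g (ginv Gr g)) = aone A (tgt Gr g)"
  "bnorm A (di g) \<le> ell Gr A \<sigma> g"
proof -
  have c: "src Gr g = tgt Gr (ginv Gr g)" by simp
  have p: "bproj A (\<sigma> g (ginv Gr g)) = tgt Gr g" using sig_p[OF c] by simp
  show "di g \<in> fib A (tgt Gr g)" "amul A (di g) (\<sigma> g (ginv Gr g)) = aone A (tgt Gr g)"
    using ainv_props[OF ba sig_inv[OF c]] p unfolding di_def by auto
  show "bnorm A (di g) \<le> ell Gr A \<sigma> g" unfolding ell_def di_def by simp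
qed

lemma Tgi_fib: "e \<in> fib E (tgt Gr g) \<Longrightarrow> T (ginv Gr g) e \<in> fib E (src Gr g)"
  using T_fib[of e "ginv Gr g"] by simp

lemma Lm_fib: "e \<in> fib E (tgt Gr g) \<Longrightarrow> Lm g e \<in> fib E (src Gr g)"
  unfolding Lm_def using m_fib[OF mb ci_props(1) Tgi_fib] .

lemma adi_fib: "act (ginv Gr g) (di g) \<in> fib A (src Gr g)"
  using act_fib[of "di g" "ginv Gr g"] di_props(1) by simp

lemma Rm_fib: "e \<in> fib E (tgt Gr g) \<Longrightarrow> Rm g e \<in> fib E (src Gr g)"
  unfolding Rm_def using m_fib[OF mb adi_fib Tgi_fib] .

lemma Lm_sub: "a \<in> fib E (tgt Gr g) \<Longrightarrow> b \<in> fib E (tgt Gr g) \<Longrightarrow> Lm g (bsub E a b) = bsub E (Lm g a) (Lm g b)"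
  unfolding Lm_def using T_sub[of a "ginv Gr g" b] m_sub[OF mb ci_props(1) Tgi_fib Tgi_fib] by simp

lemma Rm_sub: "a \<in> fib E (tgt Gr g) \<Longrightarrow> b \<in> fib E (tgt Gr g) \<Longrightarrow> Rm g (bsub E a b) = bsub E (Rm g a) (Rm g b)"
  unfolding Rm_def using T_sub[of a "ginv Gr g" b] m_sub[OF mb adi_fib Tgi_fib Tgi_fib] by simp

lemma F2:
  assumes f: "f \<in> fib E (src Gr g)"
  shows "bnorm E (bsub E f (Lm g (T g f))) \<le> rr (tgt Gr g) * bnorm E f"
proof -
  let ?h = "ginv Gr g"
  have o1: "src Gr g \<in> orbit Gr (tgt Gr g)" by (rule orbit_src[OF tg])
  have o2: "tgt Gr ?h \<in> orbit Gr (tgt Gr g)" using o1 by simp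
  have o3: "tgt Gr g = src Gr ?h" by simp
  from defect_split[OF o1 o2 o3]
  obtain a1 a2 where a: "0 \<le> a1" "0 \<le> a2" "a1 + ell Gr A \<sigma> ?h * a2 \<le> rr (tgt Gr g)"
    and b1: "\<forall>e\<in>fib E (src Gr g). bnorm E (bsub E e (T (unit Gr (src Gr g)) e)) \<le> a1 * bnorm E e"
    and b2: "\<forall>e\<in>fib E (src Gr g). bnorm E (bsub E (m (\<sigma> ?h g) (T (gmul Gr ?h g) e)) (T ?h (T g e))) \<le> a2 * bnorm E e"
    by blast
  have hg: "gmul Gr ?h g = unit Gr (src Gr g)" using inv_mul[OF tg] .
  have u: "T (unit Gr (src Gr g)) f \<in> fib E (src Gr g)" using T_fib[of f "unit Gr (src Gr g)"] f by simp
  have w: "T ?h (T g f) \<in> fib E (src Gr g)" using Tgi_fib T_fib f by blast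
  have s: "\<sigma> ?h g \<in> fib A (src Gr g)" using sig_fib[of ?h g] by simp
  show ?thesis unfolding Lm_def
    by (rule combine[OF f u w s ci_props(1) ci_props(2) _ _ ci_props(3) a(3) a(2)])
      (use b1 b2 f hg in auto)
qed

lemma TRm: assumes e: "e \<in> fib E (tgt Gr g)"
  shows "T g (Rm g e) = m (di g) (T g (T (ginv Gr g) e))"
proof -
  have "T g (Rm g e) = m (act g (act (ginv Gr g) (di g))) (T g (T (ginv Gr g) e))"
    unfolding Rm_def by (rule A_lin[OF adi_fib Tgi_fib[OF e]])
  moreover have "act g (act (ginv Gr g) (di g)) = act (gmul Gr g (ginv Gr g)) (di g)"
    using act_comp[of g "ginv Gr g" "di g"] di_props(1) by (simp add: in_fib)
  moreover have "\<dots> = di g"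
    using mul_inv[OF tg, of g] act_unit[of "di g"] di_props(1) by (simp add: in_fib)
  ultimately show ?thesis by simp
qed

lemma F1:
  assumes e: "e \<in> fib E (tgt Gr g)"
  shows "bnorm E (bsub E e (T g (Rm g e))) \<le> rr (tgt Gr g) * bnorm E e"
proof -
  let ?h = "ginv Gr g"
  have o1: "tgt Gr g \<in> orbit Gr (tgt Gr g)" by simp
  have o3: "tgt Gr ?h = src Gr g" by simp
  from defect_split[OF o1 o1 o3]
  obtain a1 a2 where a: "0 \<le> a1" "0 \<le> a2" "a1 + ell Gr A \<sigma> g * a2 \<le> rr (tgt Gr g)"
    and b1: "\<forall>e\<in>fib E (tgt Gr g). bnorm E (bsub E e (T (unit Gr (tgt Gr g)) e)) \<le> a1 * bnorm E e"
    and b2: "\<forall>e\<in>fib E (src Gr ?h). bnorm E (bsub E (m (\<sigma> g ?h) (T (gmul Gr g ?h) e)) (T g (T ?h e))) \<le> a2 * bnorm E e"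
    by blast
  have hg: "gmul Gr g ?h = unit Gr (tgt Gr g)" using mul_inv[OF tg] .
  have u: "T (unit Gr (tgt Gr g)) e \<in> fib E (tgt Gr g)" using T_fib[of e "unit Gr (tgt Gr g)"] e by simp
  have w: "T g (T ?h e) \<in> fib E (tgt Gr g)" using Tgi_fib T_fib e by blast
  have s: "\<sigma> g ?h \<in> fib A (tgt Gr g)" using sig_fib[of g ?h] by simp
  show ?thesis unfolding TRm[OF e]
    by (rule combine[OF e u w s di_props(1) di_props(2) _ _ di_props(3) a(3) a(2)])
      (use b1 b2 e hg in auto)
qed

lemma rr_lt1: "rr x < 1" using defect_eq(3)[of x] by simp

lemma m_zero: assumes "a \<in> fib A x" shows "m a (bzero E x) = bzero E x"
proof -
  interpret X: bfib E x by (rule bb_fiber[OF bbE])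
  have "m a (bscale E 0 (bzero E x)) = bscale E 0 (m a (bzero E x))" by (rule m_sc[OF mb assms]) simp
  then show ?thesis using m_fib[OF mb assms X.zm] by simp
qed

lemma T_inj:
  assumes f: "f \<in> fib E (src Gr g)" and f': "f' \<in> fib E (src Gr g)" and eq: "T g f = T g f'"
  shows "f = f'"
proof -
  interpret Y: bfib E "src Gr g" by (rule bb_fiber[OF bbE])
  interpret X: bfib E "tgt Gr g" by (rule bb_fiber[OF bbE])
  let ?d = "bsub E f f'"
  have d: "?d \<in> fib E (src Gr g)" using f f' by simp
  have "T g ?d = bzero E (tgt Gr g)" using T_sub[OF f f'] eq T_fib[OF f'] by simp
  moreover have "Lm g (bzero E (tgt Gr g)) = bzero E (src Gr g)"
    unfolding Lm_def using T_zero[of "ginv Gr g"] m_zero[OF ci_props(1)] by simp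
  ultimately have "bnorm E ?d \<le> rr (tgt Gr g) * bnorm E ?d" using F2[OF d] d by simp
  then have "bnorm E ?d = 0"
  proof (rule contrapos_pp)
    assume "bnorm E ?d \<noteq> 0"
    then have pos: "0 < bnorm E ?d" using Y.nrm_nonneg[OF d] by simp
    have "rr (tgt Gr g) * bnorm E ?d < 1 * bnorm E ?d" by (rule mult_strict_right_mono[OF rr_lt1 pos])
    then show "\<not> bnorm E ?d \<le> rr (tgt Gr g) * bnorm E ?d" by simp
  qed
  then show ?thesis using Y.nrm_zero_iff[OF d] Y.sub_eq_zr f f' by blast
qed

lemma T_surj:
  assumes e: "e \<in> fib E (tgt Gr g)"
  shows "\<exists>f\<in>fib E (src Gr g). T g f = e"
proof -
  interpret X: bfib E "tgt Gr g" by (rule bb_fiber[OF bbE])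
  have "\<exists>u\<in>fib E (tgt Gr g). T g (Rm g u) = e"
  proof (rule X.solve[where q = "rr (tgt Gr g)"])
    show "T g (Rm g u) \<in> fib E (tgt Gr g)" if "u \<in> fib E (tgt Gr g)" for u
      using T_fib Rm_fib that by blast
    show "T g (Rm g (bsub E u v)) = bsub E (T g (Rm g u)) (T g (Rm g v))"
      if "u \<in> fib E (tgt Gr g)" "v \<in> fib E (tgt Gr g)" for u v
      using Rm_sub[OF that] T_sub[OF Rm_fib[OF that(1)] Rm_fib[OF that(2)]] by simp
    show "bnorm E (bsub E u (T g (Rm g u))) \<le> rr (tgt Gr g) * bnorm E u" if "u \<in> fib E (tgt Gr g)" for u
      using F1[OF that] .
  qed (use rr_lt1 e in auto)
  then show ?thesis using Rm_fib by blast
qed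

lemma Tinv: assumes "e \<in> fib E (tgt Gr g)"
  shows "Tinv g e \<in> fib E (src Gr g)" "T g (Tinv g e) = e"
proof -
  have "\<exists>f. f \<in> fib E (src Gr g) \<and> T g f = e" using T_surj[OF assms] by blast
  then have "Tinv g e \<in> fib E (src Gr g) \<and> T g (Tinv g e) = e" unfolding Tinv_def by (rule someI_ex)
  then show "Tinv g e \<in> fib E (src Gr g)" "T g (Tinv g e) = e" by auto
qed

lemma Tinv_T: assumes "f \<in> fib E (src Gr g)" shows "Tinv g (T g f) = f"
  by (rule T_inj[OF Tinv(1)[OF T_fib[OF assms]] assms Tinv(2)[OF T_fib[OF assms]]])

lemma Tinv_nrm1:
  assumes e: "e \<in> fib E (tgt Gr g)"
  shows "(1 - rr (tgt Gr g)) * bnorm E (Tinv g e) \<le> bnorm E (Lm g e)"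
proof -
  interpret Y: bfib E "src Gr g" by (rule bb_fiber[OF bbE])
  let ?f = "Tinv g e"
  have f: "?f \<in> fib E (src Gr g)" "T g ?f = e" using Tinv[OF e] by auto
  have "bnorm E ?f \<le> bnorm E (bsub E ?f (Lm g e)) + bnorm E (Lm g e)"
    by (rule Y.nrm_le_sub[OF f(1) Lm_fib[OF e]])
  also have "\<dots> \<le> rr (tgt Gr g) * bnorm E ?f + bnorm E (Lm g e)" using F2[OF f(1)] f(2) by simp
  finally show ?thesis by (simp add: algebra_simps)
qed

lemma Lm_nrm: assumes e: "e \<in> fib E (tgt Gr g)"
  shows "bnorm E (Lm g e) \<le> bnorm A (ci g) * bnorm E (T (ginv Gr g) e)"
  unfolding Lm_def by (rule m_nrm[OF mb ci_props(1) Tgi_fib[OF e]])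

lemma Tinv_nrm:
  assumes e: "e \<in> fib E (tgt Gr g)"
  shows "bnorm E (Tinv g e) \<le> 2 * (bnorm A (ci g) * bnorm E (T (ginv Gr g) e))"
proof -
  have "(1 - rr (tgt Gr g)) * bnorm E (Tinv g e) \<le> bnorm A (ci g) * bnorm E (T (ginv Gr g) e)"
    using Tinv_nrm1[OF e] Lm_nrm[OF e] by linarith
  moreover have "0 \<le> ((1 - rr (tgt Gr g)) - 1 / 2) * bnorm E (Tinv g e)"
    by (rule mult_nonneg_nonneg) (use defect_eq(3)[of "tgt Gr g"] nrm_nonneg in auto)
  ultimately show ?thesis by (simp add: algebra_simps)
qed

lemma Tinv_sub:
  assumes a: "a \<in> fib E (tgt Gr g)" and b: "b \<in> fib E (tgt Gr g)"
  shows "Tinv g (bsub E a b) = bsub E (Tinv g a) (Tinv g b)"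
proof -
  interpret Y: bfib E "src Gr g" by (rule bb_fiber[OF bbE])
  interpret X: bfib E "tgt Gr g" by (rule bb_fiber[OF bbE])
  show ?thesis
  proof (rule T_inj)
    show "Tinv g (bsub E a b) \<in> fib E (src Gr g)" using Tinv(1) a b by simp
    show "bsub E (Tinv g a) (Tinv g b) \<in> fib E (src Gr g)" using Tinv(1) a b by simp
    show "T g (Tinv g (bsub E a b)) = T g (bsub E (Tinv g a) (Tinv g b))"
      using Tinv(2) a b T_sub[OF Tinv(1)[OF a] Tinv(1)[OF b]] by simp
  qed
qed

lemma Tinv_add:
  assumes a: "a \<in> fib E (tgt Gr g)" and b: "b \<in> fib E (tgt Gr g)"
  shows "Tinv g (badd E a b) = badd E (Tinv g a) (Tinv g b)"
proof -
  interpret Y: bfib E "src Gr g" by (rule bb_fiber[OF bbE])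
  interpret X: bfib E "tgt Gr g" by (rule bb_fiber[OF bbE])
  show ?thesis
  proof (rule T_inj)
    show "Tinv g (badd E a b) \<in> fib E (src Gr g)" using Tinv(1) a b by simp
    show "badd E (Tinv g a) (Tinv g b) \<in> fib E (src Gr g)" using Tinv(1) a b by simp
    show "T g (Tinv g (badd E a b)) = T g (badd E (Tinv g a) (Tinv g b))"
      using Tinv(2) a b T_add[OF Tinv(1)[OF a] Tinv(1)[OF b]] by simp
  qed
qed

lemma Tinv_sc:
  assumes a: "a \<in> fib E (tgt Gr g)"
  shows "Tinv g (bscale E c a) = bscale E c (Tinv g a)"
proof -
  interpret Y: bfib E "src Gr g" by (rule bb_fiber[OF bbE])
  interpret X: bfib E "tgt Gr g" by (rule bb_fiber[OF bbE])
  show ?thesis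
  proof (rule T_inj)
    show "Tinv g (bscale E c a) \<in> fib E (src Gr g)" using Tinv(1) a by simp
    show "bscale E c (Tinv g a) \<in> fib E (src Gr g)" using Tinv(1) a by simp
    show "T g (Tinv g (bscale E c a)) = T g (bscale E c (Tinv g a))"
      using Tinv(2) a T_sc[OF Tinv(1)[OF a]] by simp
  qed
qed

lemma Tinv_fbl: "fib_bounded_linear E E (tgt Gr g) (src Gr g) (Tinv g)"
  unfolding fib_bounded_linear_def
proof (intro conjI ballI allI)
  show "Tinv g a \<in> fib E (src Gr g)" if "a \<in> fib E (tgt Gr g)" for a using Tinv(1)[OF that] .
  show "Tinv g (badd E a b) = badd E (Tinv g a) (Tinv g b)" if "a \<in> fib E (tgt Gr g)" "b \<in> fib E (tgt Gr g)" for a b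
    using Tinv_add[OF that] .
  show "Tinv g (bscale E c a) = bscale E c (Tinv g a)" if "a \<in> fib E (tgt Gr g)" for c a
    using Tinv_sc[OF that] .
  obtain K where K: "\<forall>a\<in>fib E (src Gr (ginv Gr g)). bnorm E (T (ginv Gr g) a) \<le> K * bnorm E a"
    using T_bnd by blast
  show "\<exists>K. \<forall>a\<in>fib E (tgt Gr g). bnorm E (Tinv g a) \<le> K * bnorm E a"
  proof (intro exI ballI)
    fix a assume a: "a \<in> fib E (tgt Gr g)"
    have "bnorm E (T (ginv Gr g) a) \<le> K * bnorm E a" using K a by simp
    also have "\<dots> \<le> max K 0 * bnorm E a" by (rule mult_right_mono) (use nrm_nonneg in auto)
    finally have "bnorm A (ci g) * bnorm E (T (ginv Gr g) a) \<le> bnorm A (ci g) * (max K 0 * bnorm E a)"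
      by (rule mult_left_mono) (rule nrmA_nonneg)
    then have "bnorm E (Tinv g a) \<le> 2 * (bnorm A (ci g) * (max K 0 * bnorm E a))"
      using Tinv_nrm[OF a] by linarith
    then show "bnorm E (Tinv g a) \<le> (2 * bnorm A (ci g) * max K 0) * bnorm E a" by (simp add: algebra_simps)
  qed
qed

end



lemma liftF_tendsto: "(h \<longlongrightarrow> l) F \<Longrightarrow> ((\<lambda>q. h (fst q)) \<longlongrightarrow> l) (liftF E F \<phi> b0)"
  unfolding tendsto_def using liftF_fst by blast

lemma amul_tendsto:
  fixes A :: "('x::topological_space, 'a::topological_space) babundle"
  assumes ba: "banach_algebra_bundle A"
    and "(u \<longlongrightarrow> u0) F" "(v \<longlongrightarrow> v0) F" "eventually (\<lambda>i. bproj A (u i) = bproj A (v i)) F"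
    "bproj A u0 = bproj A v0"
  shows "((\<lambda>i. amul A (u i) (v i)) \<longlongrightarrow> amul A u0 v0) F"
proof -
  have "((\<lambda>i. (\<lambda>(a, b). amul A a b) (u i, v i)) \<longlongrightarrow> (\<lambda>(a, b). amul A a b) (u0, v0)) F"
    by (rule continuous_on_tendsto_compose[OF ba_cmul[OF ba]])
      (use assms in \<open>auto intro: tendsto_Pair\<close>)
  thus ?thesis by simp
qed

lemma ainv_locbound:
  fixes A :: "('x::topological_space, 'a::topological_space) babundle"
  assumes ba: "banach_algebra_bundle A" and lim: "(a \<longlongrightarrow> a0) F"
    and inv0: "a_invertible A a0" and invs: "eventually (\<lambda>i. a_invertible A (a i)) F"
  shows "\<exists>C. eventually (\<lambda>i. bnorm A (ainv A (a i)) \<le> C) F"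
proof -
  have bb: "banach_bundle A" by (rule ba_bb[OF ba])
  let ?b0 = "ainv A a0"
  have b0: "?b0 \<in> fib A (bproj A a0)" "amul A a0 ?b0 = aone A (bproj A a0)"
    using ainv_props[OF ba inv0] by auto
  have pb: "bproj A ?b0 = bproj A a0" using b0(1) by (simp add: in_fib)
  let ?\<phi> = "\<lambda>i. bproj A (a i)"
  have phi: "(?\<phi> \<longlongrightarrow> bproj A ?b0) F" using p_tendsto[OF bb lim] pb by simp
  let ?G = "liftF A F ?\<phi> ?b0"
  let ?\<alpha> = "\<lambda>q. a (fst q)"
  have al: "(?\<alpha> \<longlongrightarrow> a0) ?G" by (rule liftF_tendsto[OF lim])
  have y: "(snd \<longlongrightarrow> ?b0) ?G" by (rule liftF_snd)
  have py: "eventually (\<lambda>q. bproj A (snd q) = bproj A (?\<alpha> q)) ?G" by (rule liftF_proj[where \<phi> = ?\<phi>])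
  have m1: "((\<lambda>q. amul A (?\<alpha> q) (snd q)) \<longlongrightarrow> amul A a0 ?b0) ?G"
    by (rule amul_tendsto[OF ba al y]) (use py pb in \<open>auto elim: eventually_mono\<close>)
  have o1: "((\<lambda>q. aone A (bproj A (?\<alpha> q))) \<longlongrightarrow> aone A (bproj A a0)) ?G"
    using continuous_on_tendsto_compose[OF ba_cone[OF ba] p_tendsto[OF bb al]] by simp
  have pm: "eventually (\<lambda>q. bproj A (aone A (bproj A (?\<alpha> q))) = bproj A (amul A (?\<alpha> q) (snd q))) ?G"
    using py
  proof eventually_elim
    case (elim q)
    then have "snd q \<in> fib A (bproj A (?\<alpha> q))" by (simp add: in_fib)
    then have "amul A (?\<alpha> q) (snd q) \<in> fib A (bproj A (?\<alpha> q))" using mul_fib[OF ba] by simp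
    then show ?case by (simp add: in_fib p_one[OF ba])
  qed
  have "((\<lambda>q. bnorm A (bsub A (aone A (bproj A (?\<alpha> q))) (amul A (?\<alpha> q) (snd q)))) \<longlongrightarrow> 0) ?G"
    by (rule sub_nrm_tendsto0[OF bb o1]) (use m1 b0(2) pm in auto)
  then have ev1: "eventually (\<lambda>q. bnorm A (bsub A (aone A (bproj A (?\<alpha> q))) (amul A (?\<alpha> q) (snd q))) < 1 / 2) ?G"
    by (rule order_tendstoD) simp
  have "((\<lambda>q. bnorm A (snd q)) \<longlongrightarrow> bnorm A ?b0) ?G" by (rule nrm_tendsto[OF bb y])
  then have ev2: "eventually (\<lambda>q. bnorm A (snd q) < bnorm A ?b0 + 1) ?G"
    by (rule order_tendstoD) simp
  have ev3: "eventually (\<lambda>q. a_invertible A (?\<alpha> q)) ?G" by (rule liftF_fst[OF invs])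
  have "eventually (\<lambda>q. bnorm A (ainv A (?\<alpha> q)) \<le> 2 * (bnorm A ?b0 + 1)) ?G"
    using ev1 ev2 ev3 py
  proof eventually_elim
    case (elim q)
    let ?z = "bproj A (?\<alpha> q)" let ?x = "ainv A (?\<alpha> q)" let ?y = "snd q" let ?u = "?\<alpha> q"
    interpret Z: bfib A ?z by (rule bb_fiber[OF bb])
    have u: "?u \<in> fib A ?z" by simp
    have x: "?x \<in> fib A ?z" "amul A ?x ?u = aone A ?z" using ainv_props[OF ba elim(3)] by auto
    have yf: "?y \<in> fib A ?z" using elim(4) by (simp add: in_fib)
    have uy: "amul A ?u ?y \<in> fib A ?z" using mul_fib[OF ba u yf] .
    have "amul A ?x (bsub A (aone A ?z) (amul A ?u ?y)) = bsub A (amul A ?x (aone A ?z)) (amul A ?x (amul A ?u ?y))"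
      by (rule mul_subr[OF ba x(1) one_fib[OF ba] uy])
    also have "\<dots> = bsub A ?x ?y"
      using mul_one[OF ba x(1)] mul_assoc[OF ba x(1) u yf, symmetric] x(2) one_mul[OF ba yf] by simp
    finally have eq: "bsub A ?x ?y = amul A ?x (bsub A (aone A ?z) (amul A ?u ?y))" by simp
    have "bnorm A ?x \<le> bnorm A (bsub A ?x ?y) + bnorm A ?y" by (rule Z.nrm_le_sub[OF x(1) yf])
    also have "bnorm A (bsub A ?x ?y) \<le> bnorm A ?x * bnorm A (bsub A (aone A ?z) (amul A ?u ?y))"
      unfolding eq by (rule mul_nrm[OF ba x(1)]) (use uy one_fib[OF ba] in simp)
    also have "\<dots> \<le> bnorm A ?x * (1 / 2)"
      by (rule mult_left_mono) (use elim(1) Z.nrm_nonneg[OF x(1)] in auto)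
    finally show ?case using elim(2) by simp
  qed
  then have "eventually (\<lambda>i. bnorm A (ainv A (a i)) \<le> 2 * (bnorm A ?b0 + 1)) F"
    by (rule liftF_back[OF bb phi])
  then show ?thesis by blast
qed

context setting
begin

lemma one_minus_defect: "1 - defect Gr A E m \<sigma> T x = ereal (1 - rr x)"
  using defect_eq(1)[of x] by (metis ereal_minus(1) one_ereal_def)

lemma Tinv_opnorm:
  "opnorm E E (tgt Gr g) (Tinv g) \<le> bound Gr A E \<sigma> T (tgt Gr g) / (1 - defect Gr A E m \<sigma> T (tgt Gr g))"
proof -
  let ?x = "tgt Gr g" let ?r = "rr ?x" let ?h = "ginv Gr g"
  let ?O = "opnorm E E ?x (T ?h)"
  have r: "0 \<le> ?r" "?r \<le> 1 / 4" using defect_eq by auto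
  have bp: "ereal (ell Gr A \<sigma> ?h) * ?O \<le> bound Gr A E \<sigma> T ?x"
    using bound_pt[of ?h ?x] orbit_src[OF tg, of g] by simp
  have O0: "0 \<le> ?O" by (rule opn_nonneg)
  have l1: "1 \<le> ell Gr A \<sigma> ?h" by (rule ell_ge1)
  have p0: "0 \<le> ereal (ell Gr A \<sigma> ?h) * ?O"
  proof -
    have "0 \<le> ereal (ell Gr A \<sigma> ?h)" using l1 by simp
    then show ?thesis using O0 by (simp add: ereal_zero_le_0_iff | rule mult_nonneg_nonneg)
  qed
  have B0: "0 \<le> bound Gr A E \<sigma> T ?x" using p0 bp by (rule order_trans)
  show ?thesis
  proof (cases "bound Gr A E \<sigma> T ?x")
    case PInf
    have "1 - ?r > 0" using r by simp
    then have "\<infinity> / ereal (1 - ?r) = \<infinity>" by (simp add: divide_ereal_def)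
    then show ?thesis using PInf by (simp add: one_minus_defect del: ereal_divide)
  next
    case MInf then show ?thesis using B0 by simp
  next
    case (real b)
    obtain t where t: "?O = ereal t"
      using bp real O0 l1 by (cases ?O) auto
    have t0: "0 \<le> t" using O0 t by simp
    have lt: "ell Gr A \<sigma> ?h * t \<le> b" using bp real t by simp
    have Tt: "bnorm E (T ?h e) \<le> t * bnorm E e" if e: "e \<in> fib E ?x" for e
    proof (rule opnorm_apply[OF bbE bbE, of ?x "T ?h" "src Gr g"])
      show "T ?h a \<in> fib E (src Gr g)" if "a \<in> fib E ?x" for a using Tgi_fib that .
      show "T ?h (bscale E c a) = bscale E c (T ?h a)" if "a \<in> fib E ?x" for c a
        using T_sc[of a ?h c] that by simp
    qed (use t e in auto)
    have b0: "0 \<le> b" using lt l1 t0 by (smt (verit) mult_nonneg_nonneg)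
    have main: "bnorm E (Tinv g e) \<le> (b / (1 - ?r)) * bnorm E e" if e: "e \<in> fib E ?x" for e
    proof -
      have "(1 - ?r) * bnorm E (Tinv g e) \<le> bnorm A (ci g) * bnorm E (T ?h e)"
        using Tinv_nrm1[OF e] Lm_nrm[OF e] by linarith
      also have "\<dots> \<le> ell Gr A \<sigma> ?h * (t * bnorm E e)"
        by (rule mult_mono[OF ci_props(3) Tt[OF e]]) (use l1 nrm_nonneg in auto)
      also have "\<dots> \<le> b * bnorm E e" using mult_right_mono[OF lt nrm_nonneg[of e]] by (simp add: algebra_simps)
      finally have "(1 - ?r) * bnorm E (Tinv g e) \<le> b * bnorm E e" .
      then show ?thesis using r by (simp add: field_simps)
    qed
    have "opnorm E E ?x (Tinv g) \<le> ereal (b / (1 - ?r))"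
      by (rule opnorm_le[OF main]) (use b0 r in auto)
    moreover have "ereal b / ereal (1 - ?r) = ereal (b / (1 - ?r))" using r by simp
    ultimately show ?thesis using real by (simp add: one_minus_defect)
  qed
qed

lemma Tinv_cont: "continuous_on {(g, e). bproj E e = tgt Gr g} (\<lambda>(g, e). (g, Tinv g e))"
  unfolding continuous_on_def
proof (intro ballI)
  let ?D = "{(g, e). bproj E e = tgt Gr g}"
  fix z0 assume z0: "z0 \<in> ?D"
  obtain g0 e0 where z0e: "z0 = (g0, e0)" by (cases z0)
  have e0: "e0 \<in> fib E (tgt Gr g0)" using z0 z0e by (simp add: in_fib)
  let ?F = "at z0 within ?D"
  have Fid: "((\<lambda>z. z) \<longlongrightarrow> z0) ?F" by (rule tendsto_ident_at)
  have Fg: "(fst \<longlongrightarrow> g0) ?F" using tendsto_fst[OF Fid] z0e by simp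
  have Fe: "(snd \<longlongrightarrow> e0) ?F" using tendsto_snd[OF Fid] z0e by simp
  have evD: "eventually (\<lambda>z. z \<in> ?D) ?F" by (simp add: eventually_at_filter)
  have sc: "((\<lambda>z. \<sigma> (ginv Gr (fst z)) (fst z)) \<longlongrightarrow> \<sigma> (ginv Gr g0) g0) ?F"
  proof -
    have "((\<lambda>z. (\<lambda>(g, h). \<sigma> g h) (ginv Gr (fst z), fst z)) \<longlongrightarrow> (\<lambda>(g, h). \<sigma> g h) (ginv Gr g0, g0)) ?F"
      by (rule continuous_on_tendsto_compose[OF sig_cont])
        (use Fg tendsto_inv[OF tg Fg] in \<open>auto intro!: tendsto_Pair simp: composable_def\<close>)
    then show ?thesis by simp
  qed
  have inv0: "a_invertible A (\<sigma> (ginv Gr g0) g0)" by (rule sig_inv) simp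
  have invs: "eventually (\<lambda>z. a_invertible A (\<sigma> (ginv Gr (fst z)) (fst z))) ?F"
    by (rule always_eventually) (simp add: sig_inv)
  obtain C where C: "eventually (\<lambda>z. bnorm A (ci (fst z)) \<le> C) ?F"
    using ainv_locbound[OF ba sc inv0 invs] unfolding ci_def by blast
  let ?fz = "Tinv g0 e0"
  have f0: "?fz \<in> fib E (src Gr g0)" "T g0 ?fz = e0" using Tinv[OF e0] by auto
  let ?\<phi> = "\<lambda>z. src Gr (fst z)"
  have phi: "(?\<phi> \<longlongrightarrow> bproj E ?fz) ?F" using tendsto_src[OF tg Fg] f0(1) by (simp add: in_fib)
  let ?G = "liftF E ?F ?\<phi> ?fz"
  let ?g = "\<lambda>q. fst (fst q)" let ?e = "\<lambda>q. snd (fst q)" let ?f = "\<lambda>q. snd q"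
  have Gg: "(?g \<longlongrightarrow> g0) ?G" by (rule liftF_tendsto[OF Fg])
  have Ge: "(?e \<longlongrightarrow> e0) ?G" by (rule liftF_tendsto[OF Fe])
  have Gf: "(?f \<longlongrightarrow> ?fz) ?G" by (rule liftF_snd)
  have Gp: "eventually (\<lambda>q. bproj E (?f q) = src Gr (?g q)) ?G" by (rule liftF_proj[where \<phi> = ?\<phi>])
  have GD: "eventually (\<lambda>q. bproj E (?e q) = tgt Gr (?g q)) ?G"
    using liftF_fst[OF evD] by (simp add: case_prod_beta)
  have GC: "eventually (\<lambda>q. bnorm A (ci (?g q)) \<le> C) ?G" by (rule liftF_fst[OF C])
  have Tgf: "((\<lambda>q. T (?g q) (?f q)) \<longlongrightarrow> e0) ?G"
  proof -
    have "((\<lambda>q. (\<lambda>(g, e). (g, T g e)) (?g q, ?f q)) \<longlongrightarrow> (\<lambda>(g, e). (g, T g e)) (g0, ?fz)) ?G"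
      by (rule continuous_on_tendsto_compose[OF T_cont])
        (use Gg Gf Gp f0(1) in \<open>auto intro!: tendsto_Pair simp: in_fib\<close>)
    then have "((\<lambda>q. snd ((\<lambda>(g, e). (g, T g e)) (?g q, ?f q))) \<longlongrightarrow> snd ((\<lambda>(g, e). (g, T g e)) (g0, ?fz))) ?G"
      by (rule tendsto_snd)
    then show ?thesis using f0(2) by simp
  qed
  let ?d = "\<lambda>q. bsub E (?e q) (T (?g q) (?f q))"
  have pT: "eventually (\<lambda>q. bproj E (T (?g q) (?f q)) = tgt Gr (?g q)) ?G"
    using Gp by eventually_elim (use T_fib in \<open>auto simp: in_fib\<close>)
  have dn: "((\<lambda>q. bnorm E (?d q)) \<longlongrightarrow> 0) ?G"
  proof (rule sub_nrm_tendsto0[OF bbE Ge Tgf])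
    show "eventually (\<lambda>q. bproj E (?e q) = bproj E (T (?g q) (?f q))) ?G"
      using GD pT by eventually_elim simp
  qed
  have pd: "eventually (\<lambda>q. bproj E (?d q) = tgt Gr (?g q)) ?G"
    using GD pT by eventually_elim (simp add: p_bsub[OF bbE])
  have "((\<lambda>q. bproj E (?d q)) \<longlongrightarrow> tgt Gr g0) ?G"
    using tendsto_cong[OF pd] tendsto_tgt[OF tg Gg] by simp
  then have d0: "(?d \<longlongrightarrow> bzero E (tgt Gr g0)) ?G" by (rule zero_tendsto[OF bbE _ dn])
  have Td: "((\<lambda>q. T (ginv Gr (?g q)) (?d q)) \<longlongrightarrow> bzero E (src Gr g0)) ?G"
  proof -
    have "((\<lambda>q. (\<lambda>(g, e). (g, T g e)) (ginv Gr (?g q), ?d q)) \<longlongrightarrow>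
        (\<lambda>(g, e). (g, T g e)) (ginv Gr g0, bzero E (tgt Gr g0))) ?G"
      by (rule continuous_on_tendsto_compose[OF T_cont])
        (use tendsto_inv[OF tg Gg] d0 pd p_bzero[OF bbE] in \<open>auto intro!: tendsto_Pair\<close>)
    then have "((\<lambda>q. snd ((\<lambda>(g, e). (g, T g e)) (ginv Gr (?g q), ?d q))) \<longlongrightarrow>
        snd ((\<lambda>(g, e). (g, T g e)) (ginv Gr g0, bzero E (tgt Gr g0)))) ?G"
      by (rule tendsto_snd)
    then show ?thesis using T_zero[of "ginv Gr g0"] by simp
  qed
  have Tdn: "((\<lambda>q. bnorm E (T (ginv Gr (?g q)) (?d q))) \<longlongrightarrow> 0) ?G"
    using nrm_tendsto[OF bbE Td] bfib.nrm_zr[OF bb_fiber[OF bbE]] by simp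
  have up: "((\<lambda>q. 2 * (C * bnorm E (T (ginv Gr (?g q)) (?d q)))) \<longlongrightarrow> 0) ?G"
    using tendsto_mult_right_zero[OF tendsto_mult_right_zero[OF Tdn, of C], of 2] by simp
  let ?v = "\<lambda>q. Tinv (?g q) (?e q)"
  have eqv: "eventually (\<lambda>q. bsub E (?v q) (?f q) = Tinv (?g q) (?d q)) ?G"
    using GD Gp
  proof eventually_elim
    case (elim q)
    have e: "?e q \<in> fib E (tgt Gr (?g q))" using elim(1) by (simp add: in_fib)
    have f: "?f q \<in> fib E (src Gr (?g q))" using elim(2) by (simp add: in_fib)
    show ?case using Tinv_sub[OF e T_fib[OF f]] Tinv_T[OF f] by simp
  qed
  have vn: "((\<lambda>q. bnorm E (bsub E (?v q) (?f q))) \<longlongrightarrow> 0) ?G"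
  proof (rule tendsto_sandwich[OF _ _ tendsto_const up])
    show "eventually (\<lambda>q. 0 \<le> bnorm E (bsub E (?v q) (?f q))) ?G" by (simp add: nrm_nonneg)
    show "eventually (\<lambda>q. bnorm E (bsub E (?v q) (?f q)) \<le> 2 * (C * bnorm E (T (ginv Gr (?g q)) (?d q)))) ?G"
      using eqv GD pd GC
    proof eventually_elim
      case (elim q)
      have dq: "?d q \<in> fib E (tgt Gr (?g q))" using elim(3) by (simp add: in_fib)
      have "bnorm E (Tinv (?g q) (?d q)) \<le> 2 * (bnorm A (ci (?g q)) * bnorm E (T (ginv Gr (?g q)) (?d q)))"
        by (rule Tinv_nrm[OF dq])
      also have "\<dots> \<le> 2 * (C * bnorm E (T (ginv Gr (?g q)) (?d q)))"
        using mult_right_mono[OF elim(4) nrm_nonneg] by simp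
      finally show ?case using elim(1) by simp
    qed
  qed
  have pv: "eventually (\<lambda>q. bproj E (?v q) = bproj E (?f q)) ?G"
    using GD Gp
  proof eventually_elim
    case (elim q)
    have e: "?e q \<in> fib E (tgt Gr (?g q))" using elim(1) by (simp add: in_fib)
    show ?case using Tinv(1)[OF e] elim(2) by (simp add: in_fib)
  qed
  have vlim: "(?v \<longlongrightarrow> ?fz) ?G" by (rule fell_conv[OF bbE Gf pv vn])
  have "((\<lambda>z. Tinv (fst z) (snd z)) \<longlongrightarrow> ?fz) ?F"
    unfolding tendsto_def
  proof (intro allI impI)
    fix W assume W: "open W" "?fz \<in> W"
    then have "eventually (\<lambda>q. ?v q \<in> W) ?G" by (intro topological_tendstoD[OF vlim])
    then show "eventually (\<lambda>z. Tinv (fst z) (snd z) \<in> W) ?F"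
      by (intro liftF_back[OF bbE phi]) simp
  qed
  then have "((\<lambda>z. (fst z, Tinv (fst z) (snd z))) \<longlongrightarrow> (g0, ?fz)) ?F" using Fg by (intro tendsto_Pair)
  moreover have "(\<lambda>(g, e). (g, Tinv g e)) = (\<lambda>z. (fst z, Tinv (fst z) (snd z)))" by (auto simp: fun_eq_iff)
  ultimately show "((\<lambda>(g, e). (g, Tinv g e)) \<longlongrightarrow> (\<lambda>(g, e). (g, Tinv g e)) z0) ?F"
    using z0e by simp
qed

lemma main:
  "\<exists>Tinv. pullback_morphism E E (tgt Gr) (src Gr) Tinv \<and>
           (\<forall>g. \<forall>e\<in>fib E (src Gr g). Tinv g (T g e) = e) \<and>
           (\<forall>g. \<forall>e\<in>fib E (tgt Gr g). T g (Tinv g e) = e) \<and>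
           (\<forall>g. opnorm E E (tgt Gr g) (Tinv g)
                  \<le> bound Gr A E \<sigma> T (tgt Gr g) / (1 - defect Gr A E m \<sigma> T (tgt Gr g)))"
  apply (rule exI[of _ Tinv])
  using Tinv_fbl Tinv_cont Tinv_T Tinv(2) Tinv_opnorm unfolding pullback_morphism_def by blast

end


theorem mainTheorem3:
  fixes Gr :: "('g::t2_space, 'x::topological_space) groupoid"
    and \<mu> :: "'x \<Rightarrow> 'g measure"
    and A :: "('x, 'a::t2_space) babundle"
    and act :: "'g \<Rightarrow> 'a \<Rightarrow> 'a"
    and E :: "('x, 'e::t2_space) bbundle"
    and m :: "'a \<Rightarrow> 'e \<Rightarrow> 'e"
    and \<sigma> :: "'g \<Rightarrow> 'g \<Rightarrow> 'a"
    and T :: "'g \<Rightarrow> 'e \<Rightarrow> 'e"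
  assumes "locally_compact_groupoid Gr \<mu>"
    and "algebra_G_bundle Gr A act"
    and "module_bundle A E m"
    and "multiplier Gr A act \<sigma>"
    and "A_linear Gr A E act m T"
    and "almost_representation Gr A E m \<sigma> T"
  shows "\<exists>Tinv. pullback_morphism E E (tgt Gr) (src Gr) Tinv \<and>
           (\<forall>g. \<forall>e\<in>fib E (src Gr g). Tinv g (T g e) = e) \<and>
           (\<forall>g. \<forall>e\<in>fib E (tgt Gr g). T g (Tinv g e) = e) \<and>
           (\<forall>g. opnorm E E (tgt Gr g) (Tinv g)
                  \<le> bound Gr A E \<sigma> T (tgt Gr g) / (1 - defect Gr A E m \<sigma> T (tgt Gr g)))"
proof -
  interpret S: setting Gr \<mu> A act E m \<sigma> T by (rule setting.intro[OF assms])
  show ?thesis by (rule S.main)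
qed

end
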